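(* For every program $C$ and all quantities $\mu,g\in\mathbb A$, $$\bigoplus_{\tau\in\Sigma}\mathrm{sp}[C](\mu)(\tau)\odot g(\tau)\;=\;\bigoplus_{\sigma\in\Sigma}\mu(\sigma)\odot\mathrm{wp}[C](g)(\sigma).$$
   Context: Semiring. Fix $\mathcal A=\langle U,\oplus,\odot,\mathbb 0,\mathbb 1\rangle$, a possibly partial semiring: $\langle U,\oplus,\mathbb 0\rangle$ is a commutative monoid in which $\oplus$ may be partial, $\langle U,\odot,\mathbb 1\rangle$ is a (total) monoid, $\odot$ distributes over $\oplus$ on both sides, and $\mathbb 0\odot u=u\odot\mathbb 0=\mathbb 0$. The natural order is $u\le v$ iff $u\oplus w=v$ for some $w\in U$. Standing assumptions: $\le$ is a complete partial order; $\mathcal A$ is complete (there is an infinitary sum $\bigoplus_{i\in I}$ that agrees with $\oplus$ on finite index sets, satisfies $v\odot\bigoplus_i u_i=\bigoplus_i v\odot u_i$ and $(\bigoplus_i u_i)\odot v=\bigoplus_i u_i\odot v$ whenever defined, and is invariant under partitioning the index set); $\mathcal A$ is Scott continuous (for every directed $D\subseteq U$ and $y\in U$: $\sup_{x\in D}(x\oplus y)=(\sup D)\oplus y$, $\sup_{x\in D}(x\odot y)=(\sup D)\odot y$, $\sup_{x\in D}(y\odot x)=y\odot\sup D$); and $U$ has a greatest element. States and quantities. $\mathrm{Vars}$ is a finite set of variables, $\Sigma=\{\sigma:\mathrm{Vars}\to\mathbb N\}$, and $\sigma[x\mapsto v]$ is $\sigma$ with $x$ updated to $v$. Each expression $e$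 denotes a function $\llbracket e\rrbracket:\Sigma\to\mathbb N\cup U$. A quantity is a function $f:\Sigma\to U$; $\mathbb A$ is the set of quantities; $\oplus,\odot$ and constants are lifted pointwise. $[\varphi](\sigma)=\mathbb 1$ if $\sigma\models\varphi$ and $\mathbb 0$ otherwise. $f[x/\alpha]$ denotes $\sigma\mapsto f(\sigma[x\mapsto\alpha])$ and $f[x/e]$ denotes $\sigma\mapsto f(\sigma[x\mapsto\llbracket e\rrbracket(\sigma)])$. Programs. $C::= x:=e\mid x:=\ast\mid \mathtt{weight}\ e\mid C;C\mid C+C\mid \mathtt{iter}(C,e,e')$, with denotational semantics $\llbracket C\rrbracket:\Sigma\times\Sigma\to U$: $\llbracket x:=e\rrbracket(\sigma,\tau)=[\sigma[x\mapsto\llbracket e\rrbracket(\sigma)]=\tau]$; $\llbracket x:=\ast\rrbracket(\sigma,\tau)=\bigoplus_{\alpha\in\mathbb N}[\sigma[x\mapsto\alpha]=\tau]$; $\llbracket \mathtt{weight}\ e\rrbracket(\sigma,\tau)=\llbracket e\rrbracket(\sigma)\odot[\sigma=\tau]$; $\llbracket C_1;C_2\rrbracket(\sigma,\tau)=\bigoplus_{\iota\in\Sigma}\llbracket C_1\rrbracket(\sigma,\iota)\odot\llbracket C_2\rrbracket(\iota,\tau)$; $\llbracket C_1+C_2\rrbracket(\sigma,\tau)=\llbracket C_1\rrbracket(\sigma,\tau)\oplus\llbracket C_2\rrbracket(\sigma,\tau)$; $\llbracket\mathtt{iter}(C,e,e')\rrbracket$ is the least fixed point (pointwise natural order) of $\Phi(X)(\sigma,\tau)=\llbracket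 e\rrbracket(\sigma)\odot\big(\bigoplus_{\iota}\llbracket C\rrbracket(\sigma,\iota)\odot X(\iota,\tau)\big)\oplus\llbracket e'\rrbracket(\sigma)\odot[\sigma=\tau]$. Programs are assumed well-formed so that all sums arising are defined. Strongest post $\mathrm{sp}[C]:\mathbb A\to\mathbb A$: $\mathrm{sp}[x:=e](f)=\bigoplus_{\alpha\in\mathbb N}f[x/\alpha]\odot[x=e[x/\alpha]]$ with $[x=e[x/\alpha]](\sigma)=\mathbb 1$ iff $\sigma(x)=\llbracket e\rrbracket(\sigma[x\mapsto\alpha])$; $\mathrm{sp}[x:=\ast](f)=\bigoplus_{\alpha}f[x/\alpha]$; $\mathrm{sp}[\mathtt{weight}\ w](f)=f\odot\llbracket w\rrbracket$; $\mathrm{sp}[C_1;C_2](f)=\mathrm{sp}[C_2](\mathrm{sp}[C_1](f))$; $\mathrm{sp}[C_1+C_2](f)=\mathrm{sp}[C_1](f)\oplus\mathrm{sp}[C_2](f)$; $\mathrm{sp}[\mathtt{iter}(C,e,e')](f)=\big(\mathrm{lfp}\,X.\ f\oplus\mathrm{sp}[C](X\odot\llbracket e\rrbracket)\big)\odot\llbracket e'\rrbracket$. Weakest pre $\mathrm{wp}[C]:\mathbb A\to\mathbb A$: $\mathrm{wp}[x:=e](f)=f[x/e]$; $\mathrm{wp}[x:=\ast](f)=\bigoplus_{\alpha}f[x/\alpha]$; $\mathrm{wp}[\mathtt{weight}\ w](f)=\llbracket w\rrbracket\odot f$; $\mathrm{wp}[C_1;C_2](f)=\mathrm{wp}[C_1](\mathrm{wp}[C_2](f))$;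 $\mathrm{wp}[C_1+C_2](f)=\mathrm{wp}[C_1](f)\oplus\mathrm{wp}[C_2](f)$; $\mathrm{wp}[\mathtt{iter}(C,e,e')](f)=\mathrm{lfp}\,X.\ \llbracket e'\rrbracket\odot f\oplus\llbracket e\rrbracket\odot\mathrm{wp}[C](X)$. Least fixed points are in the pointwise natural order on $\mathbb A$. *)

theory Defs
  imports Main
begin

text \<open>A possibly partial semiring: the addition is partial (value None = undefined),
  multiplication is total.\<close>

record 'u psr =
  padd :: "'u \<Rightarrow> 'u \<Rightarrow> 'u option"
  pmul :: "'u \<Rightarrow> 'u \<Rightarrow> 'u"
  pzero :: 'u
  pone :: 'u

definition nle :: "'u psr \<Rightarrow> 'u \<Rightarrow> 'u \<Rightarrow> bool" where
  "nle A u v \<longleftrightarrow> (\<exists>w. padd A u w = Some v)"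

definition is_lub :: "'u psr \<Rightarrow> 'u set \<Rightarrow> 'u \<Rightarrow> bool" where
  "is_lub A S u \<longleftrightarrow> (\<forall>s\<in>S. nle A s u) \<and> (\<forall>v. (\<forall>s\<in>S. nle A s v) \<longrightarrow> nle A u v)"

definition nsup :: "'u psr \<Rightarrow> 'u set \<Rightarrow> 'u" where
  "nsup A S = (THE u. is_lub A S u)"

definition ndirected :: "'u psr \<Rightarrow> 'u set \<Rightarrow> bool" where
  "ndirected A D \<longleftrightarrow> D \<noteq> {} \<and> (\<forall>x\<in>D. \<forall>y\<in>D. \<exists>z\<in>D. nle A x z \<and> nle A y z)"

inductive fsum_rel :: "'u psr \<Rightarrow> ('i \<Rightarrow> 'u) \<Rightarrow> 'i set \<Rightarrow> 'u \<Rightarrow> bool"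
  for A :: "'u psr" and f :: "'i \<Rightarrow> 'u" where
  fsum_empty: "fsum_rel A f {} (pzero A)"
| fsum_insert: "\<lbrakk>finite F; i \<notin> F; fsum_rel A f F u; padd A (f i) u = Some v\<rbrakk>
                 \<Longrightarrow> fsum_rel A f (insert i F) v"

definition fsum :: "'u psr \<Rightarrow> ('i \<Rightarrow> 'u) \<Rightarrow> 'i set \<Rightarrow> 'u option" where
  "fsum A f F = (if \<exists>u. fsum_rel A f F u then Some (THE u. fsum_rel A f F u) else None)"

definition isum :: "'u psr \<Rightarrow> ('i \<Rightarrow> 'u) \<Rightarrow> 'i set \<Rightarrow> 'u option" where
  "isum A f I =
     (if \<forall>F. finite F \<and> F \<subseteq> I \<longrightarrow> fsum A f F \<noteq> None
      then Some (nsup A {the (fsum A f F) | F. finite F \<and> F \<subseteq> I})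
      else None)"

definition partial_semiring :: "'u psr \<Rightarrow> bool" where
  "partial_semiring A \<longleftrightarrow>
     \<comment> \<open>partial commutative monoid (Kleene equalities)\<close>
     (\<forall>a b. padd A a b = padd A b a) \<and>
     (\<forall>a. padd A a (pzero A) = Some a) \<and>
     (\<forall>a b c. Option.bind (padd A a b) (\<lambda>ab. padd A ab c)
            = Option.bind (padd A b c) (\<lambda>bc. padd A a bc)) \<and>
     \<comment> \<open>total multiplicative monoid\<close>
     (\<forall>a b c. pmul A (pmul A a b) c = pmul A a (pmul A b c)) \<and>
     (\<forall>a. pmul A (pone A) a = a \<and> pmul A a (pone A) = a) \<and>
     \<comment> \<open>distributivity on both sides (whenever the sum is defined)\<close>
     (\<forall>a b c v. padd A a b = Some c \<longrightarrow>
         padd A (pmul A v a) (pmul A v b) = Some (pmul A v c) \<and>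
         padd A (pmul A a v) (pmul A b v) = Some (pmul A c v)) \<and>
     \<comment> \<open>zero annihilates\<close>
     (\<forall>u. pmul A (pzero A) u = pzero A \<and> pmul A u (pzero A) = pzero A) \<and>
     \<comment> \<open>natural order is a complete partial order\<close>
     (\<forall>u v. nle A u v \<and> nle A v u \<longrightarrow> u = v) \<and>
     (\<forall>D. ndirected A D \<longrightarrow> (\<exists>u. is_lub A D u)) \<and>
     \<comment> \<open>Scott continuity\<close>
     (\<forall>D y z. ndirected A D \<longrightarrow>
         (padd A (nsup A D) y = Some z \<longleftrightarrow>
            (\<forall>x\<in>D. padd A x y \<noteq> None) \<and> is_lub A {the (padd A x y) | x. x \<in> D} z)) \<and>
     (\<forall>D y. ndirected A D \<longrightarrow>
         is_lub A {pmul A x y | x. x \<in> D} (pmul A (nsup A D) y) \<and>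
         is_lub A {pmul A y x | x. x \<in> D} (pmul A y (nsup A D))) \<and>
     \<comment> \<open>greatest element\<close>
     (\<exists>t. \<forall>u. nle A u t)"

type_synonym 'v state = "'v \<Rightarrow> nat"
type_synonym ('v, 'u) quant = "'v state \<Rightarrow> 'u"

text \<open>Expressions are given semantically: nat-valued ones (assignments) and
  weight-valued ones (weight statements, iteration).\<close>
datatype ('v, 'u) prog =
    Assign 'v "'v state \<Rightarrow> nat"
  | Havoc 'v
  | Weight "('v, 'u) quant"
  | Seq "('v, 'u) prog" "('v, 'u) prog"
  | Choice "('v, 'u) prog" "('v, 'u) prog"
  | Iter "('v, 'u) prog" "('v, 'u) quant" "('v, 'u) quant"

definition qadd :: "'u psr \<Rightarrow> ('v, 'u) quant \<Rightarrow> ('v, 'u) quant \<Rightarrow> ('v, 'u) quant option" where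
  "qadd A f h = (if \<forall>\<sigma>. padd A (f \<sigma>) (h \<sigma>) \<noteq> None
                 then Some (\<lambda>\<sigma>. the (padd A (f \<sigma>) (h \<sigma>))) else None)"

definition qsum :: "'u psr \<Rightarrow> ('i \<Rightarrow> ('v, 'u) quant) \<Rightarrow> 'i set \<Rightarrow> ('v, 'u) quant option" where
  "qsum A F I = (if \<forall>\<sigma>. isum A (\<lambda>i. F i \<sigma>) I \<noteq> None
                 then Some (\<lambda>\<sigma>. the (isum A (\<lambda>i. F i \<sigma>) I)) else None)"

definition qle :: "'u psr \<Rightarrow> ('v, 'u) quant \<Rightarrow> ('v, 'u) quant \<Rightarrow> bool" where
  "qle A f h \<longleftrightarrow> (\<forall>\<sigma>. nle A (f \<sigma>) (h \<sigma>))"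

definition plfp :: "'u psr \<Rightarrow> (('v, 'u) quant \<Rightarrow> ('v, 'u) quant option) \<Rightarrow> ('v, 'u) quant option" where
  "plfp A \<Phi> = (if \<exists>X. \<Phi> X = Some X \<and> (\<forall>Y. \<Phi> Y = Some Y \<longrightarrow> qle A X Y)
               then Some (THE X. \<Phi> X = Some X \<and> (\<forall>Y. \<Phi> Y = Some Y \<longrightarrow> qle A X Y))
               else None)"

definition iverson :: "'u psr \<Rightarrow> bool \<Rightarrow> 'u" where
  "iverson A b = (if b then pone A else pzero A)"

text \<open>Both transformers are partial: None means that some sum arising is undefined.\<close>

primrec sp :: "'u psr \<Rightarrow> ('v, 'u) prog \<Rightarrow> ('v, 'u) quant \<Rightarrow> ('v, 'u) quant option" where
  "sp A (Assign x e) f =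
     qsum A (\<lambda>\<alpha> \<sigma>. pmul A (f (\<sigma>(x := \<alpha>))) (iverson A (\<sigma> x = e (\<sigma>(x := \<alpha>))))) UNIV"
| "sp A (Havoc x) f = qsum A (\<lambda>\<alpha> \<sigma>. f (\<sigma>(x := \<alpha>))) (UNIV :: nat set)"
| "sp A (Weight w) f = Some (\<lambda>\<sigma>. pmul A (f \<sigma>) (w \<sigma>))"
| "sp A (Seq C1 C2) f = Option.bind (sp A C1 f) (sp A C2)"
| "sp A (Choice C1 C2) f =
     Option.bind (sp A C1 f) (\<lambda>a. Option.bind (sp A C2 f) (\<lambda>b. qadd A a b))"
| "sp A (Iter C e e') f =
     Option.bind
       (plfp A (\<lambda>X. Option.bind (sp A C (\<lambda>\<sigma>. pmul A (X \<sigma>) (e \<sigma>))) (\<lambda>Y. qadd A f Y)))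
       (\<lambda>L. Some (\<lambda>\<sigma>. pmul A (L \<sigma>) (e' \<sigma>)))"

primrec wp :: "'u psr \<Rightarrow> ('v, 'u) prog \<Rightarrow> ('v, 'u) quant \<Rightarrow> ('v, 'u) quant option" where
  "wp A (Assign x e) f = Some (\<lambda>\<sigma>. f (\<sigma>(x := e \<sigma>)))"
| "wp A (Havoc x) f = qsum A (\<lambda>\<alpha> \<sigma>. f (\<sigma>(x := \<alpha>))) (UNIV :: nat set)"
| "wp A (Weight w) f = Some (\<lambda>\<sigma>. pmul A (w \<sigma>) (f \<sigma>))"
| "wp A (Seq C1 C2) f = Option.bind (wp A C2 f) (wp A C1)"
| "wp A (Choice C1 C2) f =
     Option.bind (wp A C1 f) (\<lambda>a. Option.bind (wp A C2 f) (\<lambda>b. qadd A a b))"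
| "wp A (Iter C e e') f =
     plfp A (\<lambda>X. Option.bind (wp A C X)
                  (\<lambda>Y. qadd A (\<lambda>\<sigma>. pmul A (e' \<sigma>) (f \<sigma>)) (\<lambda>\<sigma>. pmul A (e \<sigma>) (Y \<sigma>))))"

end

theory Submission
  imports Defs
begin


locale ps = fixes A :: "'u psr" assumes PS: "partial_semiring A"
begin

lemmas AX0 = PS[unfolded partial_semiring_def]
lemmas AX = AX0[THEN conjunct1] AX0[THEN conjunct2, THEN conjunct1] AX0[THEN conjunct2, THEN conjunct2, THEN conjunct1] AX0[THEN conjunct2, THEN conjunct2, THEN conjunct2, THEN conjunct1] AX0[THEN conjunct2, THEN conjunct2, THEN conjunct2, THEN conjunct2, THEN conjunct1] AX0[THEN conjunct2, THEN conjunct2, THEN conjunct2, THEN conjunct2, THEN conjunct2, THEN conjunct1] AX0[THEN conjunct2, THEN conjunct2, THEN conjunct2, THEN conjunct2, THEN conjunct2, THEN conjunct2, THEN conjunct1] AX0[THEN conjunct2, THEN conjunct2, THEN conjunct2, THEN conjunct2, THEN conjunct2, THEN conjunct2, THEN conjunct2, THEN conjunct1] AX0[THEN conjunct2, THEN conjunct2, THEN conjunct2, THEN conjunct2, THEN conjunct2, THEN conjunct2, THEN conjunct2, THEN conjunct2, THEN conjunct1] AX0[THEN conjunct2, THEN conjunct2, THEN conjunct2, THEN conjunct2, THEN conjunct2, THEN conjunct2, THEN conjunct2, THEN conjunct2, THEN conjunct2, THEN conjunct1] AX0[THEN conjunct2, THEN conjunct2, THEN conjunct2, THEN conjunct2,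 THEN conjunct2, THEN conjunct2, THEN conjunct2, THEN conjunct2, THEN conjunct2, THEN conjunct2, THEN conjunct1]

lemma comm: "padd A a b = padd A b a" using AX(1) by blast
lemma zero_r[simp]: "padd A a (pzero A) = Some a" using AX(2) by blast
lemma zero_l[simp]: "padd A (pzero A) a = Some a" using zero_r comm by metis
lemma assocK: "Option.bind (padd A a b) (\<lambda>ab. padd A ab c) = Option.bind (padd A b c) (\<lambda>bc. padd A a bc)"
  using AX(3) by blast
lemma assoc1: "padd A a b = Some x \<Longrightarrow> padd A x c = Some y \<Longrightarrow> \<exists>z. padd A b c = Some z \<and> padd A a z = Some y"
  using assocK[of a b c] by (cases "padd A b c") auto
lemma assoc2: "padd A b c = Some z \<Longrightarrow> padd A a z = Some y \<Longrightarrow> \<exists>x. padd A a b = Some x \<and> padd A x c = Some y"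
  using assocK[of a b c] by (cases "padd A a b") auto
lemma massoc: "pmul A (pmul A a b) c = pmul A a (pmul A b c)" using AX(4) by blast
lemma mone_l[simp]: "pmul A (pone A) a = a" using AX(5) by blast
lemma mone_r[simp]: "pmul A a (pone A) = a" using AX(5) by blast
lemma distl: "padd A a b = Some c \<Longrightarrow> padd A (pmul A v a) (pmul A v b) = Some (pmul A v c)"
  using AX(6) by blast
lemma distr: "padd A a b = Some c \<Longrightarrow> padd A (pmul A a v) (pmul A b v) = Some (pmul A c v)"
  using AX(6) by blast
lemma mzero_l[simp]: "pmul A (pzero A) u = pzero A" using AX(7) by blast
lemma mzero_r[simp]: "pmul A u (pzero A) = pzero A" using AX(7) by blast
lemma antisym: "nle A u v \<Longrightarrow> nle A v u \<Longrightarrow> u = v" using AX(8) by blast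
lemma cpo: "ndirected A D \<Longrightarrow> \<exists>u. is_lub A D u" using AX(9) by blast
lemma cont_add: "ndirected A D \<Longrightarrow> padd A (nsup A D) y = Some z \<longleftrightarrow>
            (\<forall>x\<in>D. padd A x y \<noteq> None) \<and> is_lub A {the (padd A x y) | x. x \<in> D} z"
  using AX(10) by blast
lemma cont_mul: "ndirected A D \<Longrightarrow>
         is_lub A {pmul A x y | x. x \<in> D} (pmul A (nsup A D) y) \<and>
         is_lub A {pmul A y x | x. x \<in> D} (pmul A y (nsup A D))"
  using AX(11) by blast

lemma le_refl[simp]: "nle A a a" unfolding nle_def using zero_r by blast
lemma le_trans: "nle A a b \<Longrightarrow> nle A b c \<Longrightarrow> nle A a c"
  unfolding nle_def by (metis assoc1)
lemma zero_le[simp]: "nle A (pzero A) a" unfolding nle_def by auto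
lemma le_addI1: "padd A a b = Some c \<Longrightarrow> nle A a c" unfolding nle_def by blast
lemma le_addI2: "padd A a b = Some c \<Longrightarrow> nle A b c" unfolding nle_def by (metis comm)

lemma add_mono1: assumes "nle A a a'" "padd A a' b = Some c'"
  shows "\<exists>c. padd A a b = Some c \<and> nle A c c'"
proof -
  obtain w where w: "padd A a w = Some a'" using assms(1) unfolding nle_def by blast
  obtain z where z: "padd A w b = Some z" "padd A a z = Some c'" using assoc1[OF w assms(2)] by blast
  have "padd A b w = Some z" using z(1) comm by metis
  from assoc2[OF this z(2)] obtain x where "padd A a b = Some x" "padd A x w = Some c'" by blast
  then show ?thesis unfolding nle_def by blast
qed

lemma add_mono: assumes "nle A a a'" "nle A b b'" "padd A a' b' = Some c'"
  shows "\<exists>c. padd A a b = Some c \<and> nle A c c'"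
proof -
  obtain c1 where c1: "padd A a b' = Some c1" "nle A c1 c'" using add_mono1[OF assms(1,3)] by blast
  have "padd A b' a = Some c1" using c1 comm by metis
  from add_mono1[OF assms(2) this] obtain c where "padd A b a = Some c" "nle A c c1" by blast
  then show ?thesis using c1 le_trans comm by metis
qed

lemma mul_mono_l: "nle A a b \<Longrightarrow> nle A (pmul A c a) (pmul A c b)"
  unfolding nle_def using distl by blast
lemma mul_mono_r: "nle A a b \<Longrightarrow> nle A (pmul A a c) (pmul A b c)"
  unfolding nle_def using distr by blast

lemma lub_unique: "is_lub A S u \<Longrightarrow> is_lub A S v \<Longrightarrow> u = v"
  unfolding is_lub_def using antisym by blast
lemma nsup_eq: "is_lub A S u \<Longrightarrow> nsup A S = u"
  unfolding nsup_def using lub_unique by blast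
lemma dir_lub: "ndirected A D \<Longrightarrow> is_lub A D (nsup A D)"
  using cpo nsup_eq by metis

lemma cont_add_bound:
  assumes D: "ndirected A D" and B: "\<forall>x\<in>D. \<exists>c. padd A x y = Some c \<and> nle A c v"
  shows "\<exists>z. padd A (nsup A D) y = Some z \<and> nle A z v"
proof -
  let ?S = "{the (padd A x y) | x. x \<in> D}"
  have "ndirected A ?S"
    unfolding ndirected_def
  proof safe
    show "?S = {} \<Longrightarrow> False" using D unfolding ndirected_def by blast
  next
    fix x1 x2 assume "x1 \<in> D" "x2 \<in> D"
    then obtain z where z: "z \<in> D" "nle A x1 z" "nle A x2 z" using D unfolding ndirected_def by blast
    obtain cz where cz: "padd A z y = Some cz" using B z by blast
    obtain c1 where "padd A x1 y = Some c1" "nle A c1 cz" using add_mono1[OF z(2) cz] by blast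
    moreover obtain c2 where "padd A x2 y = Some c2" "nle A c2 cz" using add_mono1[OF z(3) cz] by blast
    ultimately show "\<exists>zz\<in>?S. nle A (the (padd A x1 y)) zz \<and> nle A (the (padd A x2 y)) zz"
      using z cz by force
  qed
  then obtain z where z: "is_lub A ?S z" using cpo by blast
  have "padd A (nsup A D) y = Some z" using cont_add[OF D] z B by auto
  moreover have "nle A z v" using z B unfolding is_lub_def by force
  ultimately show ?thesis by blast
qed

lemma cont_add_ge:
  assumes D: "ndirected A D" and E: "padd A (nsup A D) y = Some z"
    and B: "\<forall>x\<in>D. \<exists>c. padd A x y = Some c \<and> nle A c v"
  shows "nle A z v"
proof -
  have "is_lub A {the (padd A x y) | x. x \<in> D} z" using cont_add[OF D] E by blast
  then show ?thesis using B unfolding is_lub_def by force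
qed

lemma fsum_rel_finite: "fsum_rel A f F u \<Longrightarrow> finite F"
  by (induction rule: fsum_rel.induct) auto

lemma fsum_rel_remove:
  "fsum_rel A f G v \<Longrightarrow> i \<in> G \<Longrightarrow> \<exists>u. fsum_rel A f (G - {i}) u \<and> padd A (f i) u = Some v"
proof (induction arbitrary: i rule: fsum_rel.induct)
  case fsum_empty then show ?case by simp
next
  case (fsum_insert F j u v)
  show ?case
  proof (cases "i = j")
    case True
    then have "insert j F - {i} = F" using fsum_insert by auto
    then show ?thesis using fsum_insert True by auto
  next
    case False
    then have "i \<in> F" using fsum_insert by auto
    from fsum_insert.IH[OF this] obtain u'' where u'': "fsum_rel A f (F - {i}) u''" "padd A (f i) u'' = Some u" by blast
    obtain x where x: "padd A (f j) u'' = Some x" "padd A (f i) x = Some v"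
    proof -
      have "padd A u (f j) = Some v" using fsum_insert(4) comm by metis
      from assoc1[OF u''(2) this] obtain z where "padd A u'' (f j) = Some z" "padd A (f i) z = Some v" by blast
      then show ?thesis using that comm by metis
    qed
    have "fsum_rel A f (insert j (F - {i})) x"
      using fsum_insert u'' x by (intro fsum_rel.fsum_insert) auto
    moreover have "insert j (F - {i}) = insert j F - {i}" using False by auto
    ultimately show ?thesis using x by auto
  qed
qed

lemma fsum_rel_fun: "fsum_rel A f F u \<Longrightarrow> fsum_rel A f F v \<Longrightarrow> u = v"
proof (induction arbitrary: v rule: fsum_rel.induct)
  case fsum_empty
  from fsum_empty show ?case by (cases rule: fsum_rel.cases) simp_all
next
  case (fsum_insert F i u v' v)
  from fsum_rel_remove[OF fsum_insert.prems] obtain u' where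
    u': "fsum_rel A f (insert i F - {i}) u'" "padd A (f i) u' = Some v" by blast
  have "insert i F - {i} = F" using fsum_insert(2) by blast
  with u' have "fsum_rel A f F u'" by simp
  then have "u = u'" by (rule fsum_insert.IH)
  then show ?case using u'(2) fsum_insert(4) by simp
qed

lemma fsum_some: assumes "fsum_rel A f F u" shows "fsum A f F = Some u"
proof -
  have ex: "\<exists>u. fsum_rel A f F u" using assms by blast
  have th: "(THE u. fsum_rel A f F u) = u"
  proof (rule the_equality)
    show "fsum_rel A f F u" by (rule assms)
  next
    fix v assume "fsum_rel A f F v" then show "v = u" using fsum_rel_fun assms by blast
  qed
  show ?thesis unfolding fsum_def if_P[OF ex] th by (rule refl)
qed

lemma fsum_someD: assumes "fsum A f F = Some u" shows "fsum_rel A f F u"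
proof -
  have "\<exists>u. fsum_rel A f F u"
  proof (rule ccontr)
    assume "\<not> (\<exists>u. fsum_rel A f F u)"
    then have "fsum A f F = None" unfolding fsum_def by (simp only: if_False)
    with assms show False by simp
  qed
  then obtain u' where u': "fsum_rel A f F u'" by blast
  then have "fsum A f F = Some u'" by (rule fsum_some)
  then show ?thesis using assms u' by simp
qed

lemma fsum_empty[simp]: "fsum A f {} = Some (pzero A)"
  by (rule fsum_some) (rule fsum_rel.fsum_empty)

lemma fsum_infinite: "infinite F \<Longrightarrow> fsum A f F = None"
  unfolding fsum_def using fsum_rel_finite by auto

lemma fsum_insert: assumes "finite F" "i \<notin> F"
  shows "fsum A f (insert i F) = Option.bind (fsum A f F) (\<lambda>u. padd A (f i) u)"
proof (cases "fsum A f (insert i F)")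
  case None
  show ?thesis
  proof (cases "fsum A f F")
    case (Some u)
    have "padd A (f i) u = None"
    proof (rule ccontr)
      assume "padd A (f i) u \<noteq> None"
      then obtain v where "padd A (f i) u = Some v" by blast
      then have "fsum_rel A f (insert i F) v" using fsum_someD[OF Some] assms by (intro fsum_rel.fsum_insert)
      then show False using fsum_some[of f "insert i F" v] None by simp
    qed
    then show ?thesis using None Some by simp
  qed (use None in simp)
next
  case (Some v)
  from fsum_rel_remove[OF fsum_someD[OF Some]] obtain u where
    "fsum_rel A f (insert i F - {i}) u" "padd A (f i) u = Some v" by blast
  moreover have "insert i F - {i} = F" using assms by auto
  ultimately have "fsum_rel A f F u" "padd A (f i) u = Some v" by auto
  then show ?thesis using Some fsum_some[of f F u] by simp
qed

end


context ps begin

lemma fsum_single[simp]: "fsum A f {i} = Some (f i)"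
  using fsum_insert[of "{}" i f] by simp

lemma fsum_mono:
  assumes "finite F" "\<forall>i\<in>F. nle A (f i) (g i)" "fsum A g F = Some v"
  shows "\<exists>u. fsum A f F = Some u \<and> nle A u v"
  using assms
proof (induction F arbitrary: v rule: finite_induct)
  case empty then show ?case by simp
next
  case (insert i F)
  from insert.prems(2) obtain v0 where v0: "fsum A g F = Some v0" "padd A (g i) v0 = Some v"
    using fsum_insert[OF insert.hyps] by (cases "fsum A g F") auto
  from insert.IH[OF _ v0(1)] insert.prems(1) obtain u0 where u0: "fsum A f F = Some u0" "nle A u0 v0" by blast
  from add_mono[OF _ u0(2) v0(2)] insert.prems(1) obtain c where "padd A (f i) u0 = Some c" "nle A c v" by auto
  then show ?case using fsum_insert[OF insert.hyps] u0 by simp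
qed

lemma fsum_union:
  assumes "finite F" "finite G" "F \<inter> G = {}"
  shows "fsum A f (F \<union> G) = Option.bind (fsum A f F) (\<lambda>a. Option.bind (fsum A f G) (\<lambda>b. padd A a b))"
  using assms
proof (induction F rule: finite_induct)
  case empty then show ?case by (cases "fsum A f G") simp_all
next
  case (insert i F)
  have e: "insert i F \<union> G = insert i (F \<union> G)" by auto
  have ni: "i \<notin> F \<union> G" using insert by auto
  have fin: "finite (F \<union> G)" using insert by auto
  have IH: "fsum A f (F \<union> G) = Option.bind (fsum A f F) (\<lambda>a. Option.bind (fsum A f G) (\<lambda>b. padd A a b))"
    using insert by auto
  show ?case
    unfolding e fsum_insert[OF fin ni] fsum_insert[OF insert.hyps] IH
    using insert.prems assocK[of "f i"]
    by (cases "fsum A f F"; cases "fsum A f G") simp_all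
qed

lemma fsum_sub:
  assumes "finite G" "F \<subseteq> G" "fsum A f G = Some v"
  shows "\<exists>u. fsum A f F = Some u \<and> nle A u v"
proof -
  have G: "G = F \<union> (G - F)" using assms by auto
  have "fsum A f (F \<union> (G - F)) = Some v" using assms G by simp
  moreover have "finite F" using assms finite_subset by blast
  ultimately have "Option.bind (fsum A f F) (\<lambda>a. Option.bind (fsum A f (G - F)) (\<lambda>b. padd A a b)) = Some v"
    using fsum_union[of F "G - F" f] assms by simp
  then show ?thesis
    by (cases "fsum A f F"; cases "fsum A f (G - F)") (auto intro: le_addI1)
qed

lemma fsum_mult_l: "fsum A f F = Some u \<Longrightarrow> fsum A (\<lambda>i. pmul A c (f i)) F = Some (pmul A c u)"
proof (induction F arbitrary: u rule: infinite_finite_induct)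
  case (infinite F) then show ?case by (simp add: fsum_infinite)
next
  case empty then have "u = pzero A" by simp
  then show ?case by simp
next
  case (insert i F)
  from insert.prems obtain u0 where u0: "fsum A f F = Some u0" "padd A (f i) u0 = Some u"
    using fsum_insert[OF insert.hyps] by (cases "fsum A f F") auto
  then show ?case using insert.IH[OF u0(1)] distl[OF u0(2)] fsum_insert[OF insert.hyps] by simp
qed

lemma fsum_mult_r: "fsum A f F = Some u \<Longrightarrow> fsum A (\<lambda>i. pmul A (f i) c) F = Some (pmul A u c)"
proof (induction F arbitrary: u rule: infinite_finite_induct)
  case (infinite F) then show ?case by (simp add: fsum_infinite)
next
  case empty then have "u = pzero A" by simp
  then show ?case by simp
next
  case (insert i F)
  from insert.prems obtain u0 where u0: "fsum A f F = Some u0" "padd A (f i) u0 = Some u"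
    using fsum_insert[OF insert.hyps] by (cases "fsum A f F") auto
  then show ?case using insert.IH[OF u0(1)] distr[OF u0(2)] fsum_insert[OF insert.hyps] by simp
qed

lemma fsum_cong: "(\<And>i. i \<in> F \<Longrightarrow> f i = g i) \<Longrightarrow> fsum A f F = fsum A g F"
proof (induction F rule: infinite_finite_induct)
  case (infinite F) then show ?case by (simp add: fsum_infinite)
next
  case empty then show ?case by simp
next
  case (insert i F) then show ?case using fsum_insert[OF insert.hyps] by simp
qed

lemma fsum_reindex: "inj_on h F \<Longrightarrow> fsum A f (h ` F) = fsum A (\<lambda>i. f (h i)) F"
proof (induction F rule: infinite_finite_induct)
  case (infinite F)
  then have "infinite (h ` F)" using finite_imageD by blast
  then show ?case using infinite by (simp add: fsum_infinite)
next
  case empty then show ?case by simp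
next
  case (insert i F)
  have "h i \<notin> h ` F" using insert by auto
  then show ?case using insert fsum_insert[OF insert.hyps] fsum_insert[of "h ` F" "h i" f] by simp
qed

lemma fsum_zeros: "finite G \<Longrightarrow> (\<forall>i\<in>G. f i = pzero A) \<Longrightarrow> fsum A f G = Some (pzero A)"
proof (induction G rule: finite_induct)
  case empty then show ?case by simp
next
  case (insert i F) then show ?case using fsum_insert[OF insert.hyps] by simp
qed

lemma fsum_zero_ext:
  assumes "finite F" "finite G" "F \<inter> G = {}" "\<forall>i\<in>G. f i = pzero A"
  shows "fsum A f (F \<union> G) = fsum A f F"
  using fsum_union[OF assms(1-3), of f] fsum_zeros[OF assms(2,4)]
  by (cases "fsum A f F") simp_all

definition FS :: "('i \<Rightarrow> 'u) \<Rightarrow> 'i set \<Rightarrow> 'u set" where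
  "FS f I = {the (fsum A f F) | F. finite F \<and> F \<subseteq> I}"

lemma FS_dir: assumes "\<forall>F. finite F \<and> F \<subseteq> I \<longrightarrow> fsum A f F \<noteq> None"
  shows "ndirected A (FS f I)"
  unfolding ndirected_def
proof safe
  assume "FS f I = {}" then show False unfolding FS_def by blast
next
  fix x y assume "x \<in> FS f I" "y \<in> FS f I"
  then obtain F G where FG: "finite F" "F \<subseteq> I" "x = the (fsum A f F)" "finite G" "G \<subseteq> I" "y = the (fsum A f G)"
    unfolding FS_def by blast
  obtain v where v: "fsum A f (F \<union> G) = Some v" using assms FG by auto
  have fu: "finite (F \<union> G)" using FG by auto
  obtain x' where x': "fsum A f F = Some x'" "nle A x' v" using fsum_sub[OF fu _ v, of F] by auto
  obtain y' where y': "fsum A f G = Some y'" "nle A y' v" using fsum_sub[OF fu _ v, of G] by auto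
  have "v \<in> FS f I" unfolding FS_def using FG v by (auto intro!: exI[of _ "F \<union> G"])
  then show "\<exists>z\<in>FS f I. nle A x z \<and> nle A y z" using x' y' FG by auto
qed

lemma isum_Some_iff: "isum A f I = Some u \<longleftrightarrow>
   (\<forall>F. finite F \<and> F \<subseteq> I \<longrightarrow> fsum A f F \<noteq> None) \<and> u = nsup A (FS f I)"
  unfolding isum_def FS_def by auto

lemma isum_lub: "isum A f I = Some u \<Longrightarrow> is_lub A (FS f I) u"
proof -
  assume "isum A f I = Some u"
  then have "(\<forall>F. finite F \<and> F \<subseteq> I \<longrightarrow> fsum A f F \<noteq> None)" "u = nsup A (FS f I)"
    unfolding isum_Some_iff by auto
  then show ?thesis using FS_dir[of I f] dir_lub by blast
qed

lemma isum_le: assumes "isum A f I = Some u" "finite F" "F \<subseteq> I"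
  shows "\<exists>x. fsum A f F = Some x \<and> nle A x u"
proof -
  obtain x where x: "fsum A f F = Some x" using assms isum_Some_iff by blast
  have "x \<in> FS f I" unfolding FS_def using x assms by force
  then show ?thesis using isum_lub[OF assms(1)] x unfolding is_lub_def by blast
qed

lemma isum_least: assumes "isum A f I = Some u"
  "\<And>F x. finite F \<Longrightarrow> F \<subseteq> I \<Longrightarrow> fsum A f F = Some x \<Longrightarrow> nle A x v"
  shows "nle A u v"
proof -
  have "\<forall>s\<in>FS f I. nle A s v"
  proof
    fix s assume "s \<in> FS f I"
    then obtain F where F: "finite F" "F \<subseteq> I" "s = the (fsum A f F)" unfolding FS_def by blast
    then obtain x where "fsum A f F = Some x" using assms(1) isum_Some_iff by blast
    then show "nle A s v" using assms(2) F by auto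
  qed
  then show ?thesis using isum_lub[OF assms(1)] unfolding is_lub_def by blast
qed

lemma isum_bound: assumes "\<And>F. finite F \<Longrightarrow> F \<subseteq> I \<Longrightarrow> \<exists>x. fsum A f F = Some x \<and> nle A x v"
  shows "\<exists>u. isum A f I = Some u \<and> nle A u v"
proof -
  have d: "\<forall>F. finite F \<and> F \<subseteq> I \<longrightarrow> fsum A f F \<noteq> None" using assms by fastforce
  then have s: "isum A f I = Some (nsup A (FS f I))" using isum_Some_iff by blast
  have "nle A (nsup A (FS f I)) v" using isum_least[OF s] assms by fastforce
  then show ?thesis using s by blast
qed

lemma isum_dom:
  assumes "\<And>F. finite F \<Longrightarrow> F \<subseteq> I \<Longrightarrow> \<exists>G. finite G \<and> G \<subseteq> J \<and>
             (\<forall>y. fsum A g G = Some y \<longrightarrow> (\<exists>x. fsum A f F = Some x \<and> nle A x y))"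
    and "isum A g J = Some v"
  shows "\<exists>u. isum A f I = Some u \<and> nle A u v"
proof (rule isum_bound)
  fix F assume F: "finite F" "F \<subseteq> I"
  from assms(1)[OF F] obtain G where G: "finite G" "G \<subseteq> J" "\<forall>y. fsum A g G = Some y \<longrightarrow> (\<exists>x. fsum A f F = Some x \<and> nle A x y)"
    by (elim exE conjE) (intro that)
  obtain y where y: "fsum A g G = Some y" "nle A y v" using isum_le[OF assms(2) G(1,2)] by blast
  obtain x where x: "fsum A f F = Some x" "nle A x y" using G(3) y(1) by blast
  show "\<exists>x. fsum A f F = Some x \<and> nle A x v" using x le_trans[OF x(2) y(2)] by blast
qed

lemma isum_eq_dom:
  assumes "\<And>F. finite F \<Longrightarrow> F \<subseteq> I \<Longrightarrow> \<exists>G. finite G \<and> G \<subseteq> J \<and>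
             (\<forall>y. fsum A g G = Some y \<longrightarrow> (\<exists>x. fsum A f F = Some x \<and> nle A x y))"
    and "\<And>G. finite G \<Longrightarrow> G \<subseteq> J \<Longrightarrow> \<exists>F. finite F \<and> F \<subseteq> I \<and>
             (\<forall>y. fsum A f F = Some y \<longrightarrow> (\<exists>x. fsum A g G = Some x \<and> nle A x y))"
  shows "isum A f I = isum A g J"
proof (cases "isum A g J")
  case None
  show ?thesis
  proof (cases "isum A f I")
    case (Some u)
    obtain v where "isum A g J = Some v" using isum_dom[OF assms(2) Some] by blast
    then show ?thesis using None by simp
  qed (use None in simp)
next
  case (Some v)
  then obtain u where u: "isum A f I = Some u" "nle A u v" using isum_dom[OF assms(1)] by blast
  obtain v' where "isum A g J = Some v'" "nle A v' u" using isum_dom[OF assms(2) u(1)] by blast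
  then show ?thesis using Some u antisym by simp
qed

lemma isum_sub: assumes "I \<subseteq> J" "isum A f J = Some v" shows "\<exists>u. isum A f I = Some u \<and> nle A u v"
proof (rule isum_dom[OF _ assms(2)])
  fix F assume "finite F" "F \<subseteq> I"
  then show "\<exists>G. finite G \<and> G \<subseteq> J \<and> (\<forall>y. fsum A f G = Some y \<longrightarrow> (\<exists>x. fsum A f F = Some x \<and> nle A x y))"
    using assms(1) by (intro exI[of _ F]) auto
qed

lemma isum_mono: assumes "\<forall>i\<in>I. nle A (f i) (g i)" "isum A g I = Some v"
  shows "\<exists>u. isum A f I = Some u \<and> nle A u v"
proof (rule isum_dom[OF _ assms(2)])
  fix F assume F: "finite F" "F \<subseteq> I"
  have m: "\<forall>i\<in>F. nle A (f i) (g i)" using assms(1) F by blast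
  show "\<exists>G. finite G \<and> G \<subseteq> I \<and> (\<forall>y. fsum A g G = Some y \<longrightarrow> (\<exists>x. fsum A f F = Some x \<and> nle A x y))"
  proof (intro exI[of _ F] conjI allI impI)
    fix y assume "fsum A g F = Some y" then show "\<exists>x. fsum A f F = Some x \<and> nle A x y" using fsum_mono[OF F(1) m] by blast
  qed (use F in auto)
qed

lemma isum_cong: assumes "\<And>i. i \<in> I \<Longrightarrow> f i = g i" shows "isum A f I = isum A g I"
proof -
  have e: "\<And>F. F \<subseteq> I \<Longrightarrow> fsum A f F = fsum A g F" using assms by (intro fsum_cong) auto
  show ?thesis
  proof (rule isum_eq_dom)
    fix F assume F: "finite F" "F \<subseteq> I"
    show "\<exists>G. finite G \<and> G \<subseteq> I \<and> (\<forall>y. fsum A g G = Some y \<longrightarrow> (\<exists>x. fsum A f F = Some x \<and> nle A x y))"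
      by (intro exI[of _ F] conjI allI impI) (use F e[OF F(2)] in auto)
  next
    fix F assume F: "finite F" "F \<subseteq> I"
    show "\<exists>G. finite G \<and> G \<subseteq> I \<and> (\<forall>y. fsum A f G = Some y \<longrightarrow> (\<exists>x. fsum A g F = Some x \<and> nle A x y))"
      by (intro exI[of _ F] conjI allI impI) (use F e[OF F(2)] in auto)
  qed
qed

lemma isum_reindex: assumes "bij_betw h I J" shows "isum A (\<lambda>i. f (h i)) I = isum A f J"
proof (rule isum_eq_dom)
  fix F assume F: "finite F" "F \<subseteq> I"
  have "inj_on h I" using assms bij_betw_def by blast
  then have "inj_on h F" using F inj_on_subset by blast
  then have "fsum A f (h ` F) = fsum A (\<lambda>i. f (h i)) F" by (rule fsum_reindex)
  moreover have "h ` F \<subseteq> J" using assms F bij_betwE by blast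
  ultimately show "\<exists>G. finite G \<and> G \<subseteq> J \<and> (\<forall>y. fsum A f G = Some y \<longrightarrow> (\<exists>x. fsum A (\<lambda>i. f (h i)) F = Some x \<and> nle A x y))"
    using F by (intro exI[of _ "h ` F"]) auto
next
  fix G assume G: "finite G" "G \<subseteq> J"
  let ?F = "{i\<in>I. h i \<in> G}"
  have hF: "h ` ?F = G" using assms G unfolding bij_betw_def by auto
  have "inj_on h I" using assms bij_betw_def by blast
  then have inj: "inj_on h ?F" by (rule inj_on_subset) auto
  have "finite (h ` ?F)" using hF G by simp
  then have fin: "finite ?F" using finite_imageD inj by blast
  have "fsum A f (h ` ?F) = fsum A (\<lambda>i. f (h i)) ?F" using inj by (rule fsum_reindex)
  then show "\<exists>F. finite F \<and> F \<subseteq> I \<and> (\<forall>y. fsum A (\<lambda>i. f (h i)) F = Some y \<longrightarrow> (\<exists>x. fsum A f G = Some x \<and> nle A x y))"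
    using fin hF by (intro exI[of _ ?F]) auto
qed

lemma isum_zero_ext: assumes "I \<subseteq> J" "\<forall>i\<in>J - I. f i = pzero A" shows "isum A f I = isum A f J"
proof (rule isum_eq_dom)
  fix F assume "finite F" "F \<subseteq> I"
  then show "\<exists>G. finite G \<and> G \<subseteq> J \<and> (\<forall>y. fsum A f G = Some y \<longrightarrow> (\<exists>x. fsum A f F = Some x \<and> nle A x y))"
    using assms by (intro exI[of _ F]) auto
next
  fix G assume G: "finite G" "G \<subseteq> J"
  have "G = (G \<inter> I) \<union> (G - I)" by auto
  then have "fsum A f G = fsum A f (G \<inter> I)"
    using fsum_zero_ext[of "G \<inter> I" "G - I" f] G assms by auto
  then show "\<exists>F. finite F \<and> F \<subseteq> I \<and> (\<forall>y. fsum A f F = Some y \<longrightarrow> (\<exists>x. fsum A f G = Some x \<and> nle A x y))"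
    using G by (intro exI[of _ "G \<inter> I"]) auto
qed

lemma isum_finite: assumes "finite I" shows "isum A f I = fsum A f I"
proof (cases "fsum A f I")
  case None
  then show ?thesis unfolding isum_def using assms by auto
next
  case (Some v)
  obtain u where u: "isum A f I = Some u" "nle A u v"
    using isum_bound[of I f v] fsum_sub[OF assms _ Some] by blast
  obtain x where "fsum A f I = Some x" "nle A x u" using isum_le[OF u(1) assms] by blast
  then show ?thesis using u Some antisym by simp
qed

lemma isum_single[simp]: "isum A f {i} = Some (f i)" by (simp add: isum_finite)
lemma isum_empty[simp]: "isum A f {} = Some (pzero A)" by (simp add: isum_finite)

lemma isum_mult_l: assumes "isum A f I = Some u" shows "isum A (\<lambda>i. pmul A c (f i)) I = Some (pmul A c u)"
proof -
  obtain u' where u': "isum A (\<lambda>i. pmul A c (f i)) I = Some u'" "nle A u' (pmul A c u)"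
  proof -
    have "\<exists>u'. isum A (\<lambda>i. pmul A c (f i)) I = Some u' \<and> nle A u' (pmul A c u)"
    proof (rule isum_bound)
      fix F assume "finite F" "F \<subseteq> I"
      then obtain x where "fsum A f F = Some x" "nle A x u" using isum_le[OF assms] by blast
      then show "\<exists>x. fsum A (\<lambda>i. pmul A c (f i)) F = Some x \<and> nle A x (pmul A c u)"
        using fsum_mult_l mul_mono_l by blast
    qed
    then show ?thesis using that by blast
  qed
  have d: "ndirected A (FS f I)" using assms isum_Some_iff FS_dir by metis
  have us: "u = nsup A (FS f I)" using assms isum_Some_iff by blast
  have lub: "is_lub A {pmul A c x | x. x \<in> FS f I} (pmul A c u)" using cont_mul[OF d] us by simp
  have "nle A (pmul A c u) u'"
  proof -
    have "\<forall>s\<in>{pmul A c x | x. x \<in> FS f I}. nle A s u'"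
    proof safe
      fix x assume "x \<in> FS f I"
      then obtain F where F: "finite F" "F \<subseteq> I" "x = the (fsum A f F)" unfolding FS_def by blast
      then obtain x' where x': "fsum A f F = Some x'" using assms isum_Some_iff by blast
      obtain y where "fsum A (\<lambda>i. pmul A c (f i)) F = Some y" "nle A y u'" using isum_le[OF u'(1) F(1,2)] by blast
      then show "nle A (pmul A c x) u'" using fsum_mult_l[OF x'] F x' by simp
    qed
    then show ?thesis using lub unfolding is_lub_def by blast
  qed
  then show ?thesis using u' antisym by simp
qed

lemma isum_mult_r: assumes "isum A f I = Some u" shows "isum A (\<lambda>i. pmul A (f i) c) I = Some (pmul A u c)"
proof -
  obtain u' where u': "isum A (\<lambda>i. pmul A (f i) c) I = Some u'" "nle A u' (pmul A u c)"
  proof -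
    have "\<exists>u'. isum A (\<lambda>i. pmul A (f i) c) I = Some u' \<and> nle A u' (pmul A u c)"
    proof (rule isum_bound)
      fix F assume "finite F" "F \<subseteq> I"
      then obtain x where "fsum A f F = Some x" "nle A x u" using isum_le[OF assms] by blast
      then show "\<exists>x. fsum A (\<lambda>i. pmul A (f i) c) F = Some x \<and> nle A x (pmul A u c)"
        using fsum_mult_r mul_mono_r by blast
    qed
    then show ?thesis using that by blast
  qed
  have d: "ndirected A (FS f I)" using assms isum_Some_iff FS_dir by metis
  have us: "u = nsup A (FS f I)" using assms isum_Some_iff by blast
  have lub: "is_lub A {pmul A x c | x. x \<in> FS f I} (pmul A u c)" using cont_mul[OF d] us by simp
  have "nle A (pmul A u c) u'"
  proof -
    have "\<forall>s\<in>{pmul A x c | x. x \<in> FS f I}. nle A s u'"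
    proof safe
      fix x assume "x \<in> FS f I"
      then obtain F where F: "finite F" "F \<subseteq> I" "x = the (fsum A f F)" unfolding FS_def by blast
      then obtain x' where x': "fsum A f F = Some x'" using assms isum_Some_iff by blast
      obtain y where "fsum A (\<lambda>i. pmul A (f i) c) F = Some y" "nle A y u'" using isum_le[OF u'(1) F(1,2)] by blast
      then show "nle A (pmul A x c) u'" using fsum_mult_r[OF x'] F x' by simp
    qed
    then show ?thesis using lub unfolding is_lub_def by blast
  qed
  then show ?thesis using u' antisym by simp
qed

end


context ps begin

lemma isum_add_bound:
  assumes a: "isum A f I = Some a" and b: "isum A g J = Some b"
    and B: "\<And>F G x y. finite F \<Longrightarrow> F \<subseteq> I \<Longrightarrow> finite G \<Longrightarrow> G \<subseteq> J \<Longrightarrow> fsum A f F = Some x \<Longrightarrow>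
              fsum A g G = Some y \<Longrightarrow> \<exists>c. padd A x y = Some c \<and> nle A c v"
  shows "\<exists>c. padd A a b = Some c \<and> nle A c v"
proof -
  have da: "ndirected A (FS f I)" "a = nsup A (FS f I)"
    using a isum_Some_iff[of f I a] FS_dir[of I f] by auto
  have db: "ndirected A (FS g J)" "b = nsup A (FS g J)"
    using b isum_Some_iff[of g J b] FS_dir[of J g] by auto
  have "\<forall>x\<in>FS f I. \<exists>c. padd A x b = Some c \<and> nle A c v"
  proof
    fix x assume "x \<in> FS f I"
    then obtain F where F: "finite F" "F \<subseteq> I" "x = the (fsum A f F)" unfolding FS_def by blast
    then obtain x' where x': "fsum A f F = Some x'" using a isum_Some_iff by blast
    have "\<forall>y\<in>FS g J. \<exists>c. padd A y x = Some c \<and> nle A c v"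
    proof
      fix y assume "y \<in> FS g J"
      then obtain G where G: "finite G" "G \<subseteq> J" "y = the (fsum A g G)" unfolding FS_def by blast
      then obtain y' where y': "fsum A g G = Some y'" using b isum_Some_iff by blast
      from B[OF F(1,2) G(1,2) x' y'] show "\<exists>c. padd A y x = Some c \<and> nle A c v"
        using F(3) G(3) x' y' comm by simp
    qed
    from cont_add_bound[OF db(1) this] show "\<exists>c. padd A x b = Some c \<and> nle A c v"
      using db(2) comm by metis
  qed
  from cont_add_bound[OF da(1) this] show ?thesis using da(2) by simp
qed

lemma isum_union:
  assumes dj: "I \<inter> J = {}"
  shows "isum A f (I \<union> J) = Option.bind (isum A f I) (\<lambda>a. Option.bind (isum A f J) (\<lambda>b. padd A a b))"
proof -
  have split: "fsum A f H = Option.bind (fsum A f (H \<inter> I)) (\<lambda>a. Option.bind (fsum A f (H \<inter> J)) (\<lambda>b. padd A a b))"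
    if "finite H" "H \<subseteq> I \<union> J" for H
  proof -
    have "H = (H \<inter> I) \<union> (H \<inter> J)" using that by auto
    then show ?thesis using fsum_union[of "H \<inter> I" "H \<inter> J" f] that dj by auto
  qed
  have case1: "isum A f (I \<union> J) = Some c"
    if a: "isum A f I = Some a" and b: "isum A f J = Some b" and c: "padd A a b = Some c" for a b c
  proof -
    obtain u where u: "isum A f (I \<union> J) = Some u" "nle A u c"
    proof -
      have "\<exists>u. isum A f (I \<union> J) = Some u \<and> nle A u c"
      proof (rule isum_bound)
        fix H assume H: "finite H" "H \<subseteq> I \<union> J"
        obtain x where x: "fsum A f (H \<inter> I) = Some x" "nle A x a" using isum_le[OF a] H by auto
        obtain y where y: "fsum A f (H \<inter> J) = Some y" "nle A y b" using isum_le[OF b] H by auto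
        obtain c' where "padd A x y = Some c'" "nle A c' c" using add_mono[OF x(2) y(2) c] by blast
        then show "\<exists>x. fsum A f H = Some x \<and> nle A x c" using split[OF H] x y by simp
      qed
      then show ?thesis using that by blast
    qed
    obtain c' where c': "padd A a b = Some c'" "nle A c' u"
    proof -
      have "\<exists>c'. padd A a b = Some c' \<and> nle A c' u"
      proof (rule isum_add_bound[OF a b])
        fix F G x y assume FG: "finite F" "F \<subseteq> I" "finite G" "G \<subseteq> J" "fsum A f F = Some x" "fsum A f G = Some y"
        have "F \<inter> G = {}" using FG dj by auto
        then have "fsum A f (F \<union> G) = padd A x y" using fsum_union[of F G f] FG by simp
        moreover have "finite (F \<union> G)" "F \<union> G \<subseteq> I \<union> J" using FG by auto
        moreover from isum_le[OF u(1) this] obtain z where "fsum A f (F \<union> G) = Some z" "nle A z u" by blast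
        ultimately show "\<exists>c. padd A x y = Some c \<and> nle A c u" by metis
      qed
      then show ?thesis using that by blast
    qed
    then show ?thesis using c u antisym by simp
  qed
  show ?thesis
  proof (cases "isum A f (I \<union> J)")
    case (Some u)
    obtain a where a: "isum A f I = Some a" using isum_sub[OF _ Some, of I] by auto
    obtain b where b: "isum A f J = Some b" using isum_sub[OF _ Some, of J] by auto
    obtain c where c: "padd A a b = Some c"
    proof -
      have "\<exists>c. padd A a b = Some c \<and> nle A c u"
      proof (rule isum_add_bound[OF a b])
        fix F G x y assume FG: "finite F" "F \<subseteq> I" "finite G" "G \<subseteq> J" "fsum A f F = Some x" "fsum A f G = Some y"
        have "F \<inter> G = {}" using FG dj by auto
        then have "fsum A f (F \<union> G) = padd A x y" using fsum_union[of F G f] FG by simp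
        moreover have "finite (F \<union> G)" "F \<union> G \<subseteq> I \<union> J" using FG by auto
        moreover from isum_le[OF Some this] obtain z where "fsum A f (F \<union> G) = Some z" "nle A z u" by blast
        ultimately show "\<exists>c. padd A x y = Some c \<and> nle A c u" by metis
      qed
      then show ?thesis using that by blast
    qed
    show ?thesis using case1[OF a b c] a b c by simp
  next
    case None
    show ?thesis
    proof (cases "isum A f I"; cases "isum A f J")
      fix a b assume ab: "isum A f I = Some a" "isum A f J = Some b"
      show ?thesis
      proof (cases "padd A a b")
        case (Some c) then show ?thesis using case1[OF ab Some] None by simp
      qed (use ab None in simp)
    qed (use None in simp_all)
  qed
qed

lemma isum_sigma_fin:
  assumes "finite F" "\<And>i. i \<in> F \<Longrightarrow> isum A (f i) (J i) = Some (h i)"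
  shows "isum A (\<lambda>p. f (fst p) (snd p)) (Sigma F J) = fsum A h F"
  using assms
proof (induction F rule: finite_induct)
  case empty then show ?case by simp
next
  case (insert i F)
  have e: "Sigma (insert i F) J = ((\<lambda>j. (i, j)) ` J i) \<union> Sigma F J" by auto
  have dj: "((\<lambda>j. (i, j)) ` J i) \<inter> Sigma F J = {}" using insert by auto
  have bij: "bij_betw (\<lambda>j. (i, j)) (J i) ((\<lambda>j. (i, j)) ` J i)" by (auto simp: bij_betw_def inj_on_def)
  have s1: "isum A (\<lambda>p. f (fst p) (snd p)) ((\<lambda>j. (i, j)) ` J i) = Some (h i)"
    using isum_reindex[OF bij, of "\<lambda>p. f (fst p) (snd p)"] insert.prems by simp
  have s2: "isum A (\<lambda>p. f (fst p) (snd p)) (Sigma F J) = fsum A h F" using insert by auto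
  show ?case unfolding e isum_union[OF dj] s1 s2 fsum_insert[OF insert.hyps] by (cases "fsum A h F") simp_all
qed

lemma isum_sigma:
  "isum A (\<lambda>p. f (fst p) (snd p)) (Sigma I J) =
     (if \<forall>i\<in>I. isum A (f i) (J i) \<noteq> None then isum A (\<lambda>i. the (isum A (f i) (J i))) I else None)"
proof (cases "\<forall>i\<in>I. isum A (f i) (J i) \<noteq> None")
  case False
  then obtain i where i: "i \<in> I" "isum A (f i) (J i) = None" by blast
  have "isum A (\<lambda>p. f (fst p) (snd p)) (Sigma I J) = None"
  proof (rule ccontr)
    assume "isum A (\<lambda>p. f (fst p) (snd p)) (Sigma I J) \<noteq> None"
    then obtain u where u: "isum A (\<lambda>p. f (fst p) (snd p)) (Sigma I J) = Some u" by blast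
    have "(\<lambda>j. (i, j)) ` J i \<subseteq> Sigma I J" using i by auto
    from isum_sub[OF this u] obtain x where x: "isum A (\<lambda>p. f (fst p) (snd p)) ((\<lambda>j. (i, j)) ` J i) = Some x" by blast
    have bij: "bij_betw (\<lambda>j. (i, j)) (J i) ((\<lambda>j. (i, j)) ` J i)" by (auto simp: bij_betw_def inj_on_def)
    have "isum A (f i) (J i) = Some x"
      using isum_reindex[OF bij, of "\<lambda>p. f (fst p) (snd p)"] x by simp
    then show False using i by simp
  qed
  then show ?thesis unfolding if_not_P[OF False] .
next
  case True
  define h where "h i = the (isum A (f i) (J i))" for i
  have hI: "\<And>i. i \<in> I \<Longrightarrow> isum A (f i) (J i) = Some (h i)" using True h_def by auto
  have fin: "isum A (\<lambda>p. f (fst p) (snd p)) (Sigma F J) = fsum A h F" if "finite F" "F \<subseteq> I" for F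
    using isum_sigma_fin[OF that(1), of f J h] hI that(2) by auto
  have A1: "isum A (\<lambda>p. f (fst p) (snd p)) (Sigma I J) = Some v"
    if v: "isum A h I = Some v" for v
  proof -
    obtain u where u: "isum A (\<lambda>p. f (fst p) (snd p)) (Sigma I J) = Some u" "nle A u v"
    proof -
      have "\<exists>u. isum A (\<lambda>p. f (fst p) (snd p)) (Sigma I J) = Some u \<and> nle A u v"
      proof (rule isum_bound)
        fix G assume G: "finite G" "G \<subseteq> Sigma I J"
        let ?F = "fst ` G"
        have F: "finite ?F" "?F \<subseteq> I" using G by auto
        obtain y where y: "fsum A h ?F = Some y" "nle A y v" using isum_le[OF v F] by blast
        have "G \<subseteq> Sigma ?F J" using G by force
        from isum_le[OF fin[OF F, unfolded y] G(1) this]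
        show "\<exists>x. fsum A (\<lambda>p. f (fst p) (snd p)) G = Some x \<and> nle A x v" using y le_trans by blast
      qed
      then show ?thesis using that by blast
    qed
    have "nle A v u"
    proof (rule isum_least[OF v])
      fix F x assume F: "finite F" "F \<subseteq> I" "fsum A h F = Some x"
      have "Sigma F J \<subseteq> Sigma I J" using F by auto
      from isum_sub[OF this u(1)] show "nle A x u" using fin[OF F(1,2)] F(3) by auto
    qed
    then show ?thesis using u antisym by simp
  qed
  show ?thesis
  proof (cases "isum A h I")
    case (Some v)
    have hh: "(\<lambda>i. the (isum A (f i) (J i))) = h" by (rule ext) (simp add: h_def)
    show ?thesis using A1[OF Some] True Some unfolding hh by simp
  next
    case None
    have "isum A (\<lambda>p. f (fst p) (snd p)) (Sigma I J) = None"
    proof (rule ccontr)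
      assume "isum A (\<lambda>p. f (fst p) (snd p)) (Sigma I J) \<noteq> None"
      then obtain u where u: "isum A (\<lambda>p. f (fst p) (snd p)) (Sigma I J) = Some u" by blast
      have "\<exists>v. isum A h I = Some v \<and> nle A v u"
      proof (rule isum_bound)
        fix F assume F: "finite F" "F \<subseteq> I"
        have "Sigma F J \<subseteq> Sigma I J" using F by auto
        from isum_sub[OF this u] show "\<exists>x. fsum A h F = Some x \<and> nle A x u" using fin[OF F] by auto
      qed
      then show False using None by simp
    qed
    have hh: "(\<lambda>i. the (isum A (f i) (J i))) = h" by (rule ext) (simp add: h_def)
    show ?thesis using None True \<open>isum A (\<lambda>p. f (fst p) (snd p)) (Sigma I J) = None\<close> unfolding hh by simp
  qed
qed

end


datatype tr = TA | TH nat | TW | TS tr tr | TL tr | TR tr | TI "tr list"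

primrec runP :: "'u psr \<Rightarrow> (tr \<Rightarrow> 'v state \<Rightarrow> ('v state \<times> 'u) option) \<Rightarrow> ('v, 'u) quant \<Rightarrow> tr list \<Rightarrow> 'v state \<Rightarrow> ('v state \<times> 'u) option" where
  "runP A r e [] \<sigma> = Some (\<sigma>, pone A)"
| "runP A r e (t # ts) \<sigma> = (case r t \<sigma> of None \<Rightarrow> None | Some (\<iota>, a) \<Rightarrow>
      (case runP A r e ts \<iota> of None \<Rightarrow> None | Some (\<tau>, b) \<Rightarrow> Some (\<tau>, pmul A (pmul A (e \<sigma>) a) b)))"

primrec run :: "'u psr \<Rightarrow> ('v, 'u) prog \<Rightarrow> tr \<Rightarrow> 'v state \<Rightarrow> ('v state \<times> 'u) option" where
  "run A (Assign x e) = (\<lambda>t \<sigma>. if t = TA then Some (\<sigma>(x := e \<sigma>), pone A) else None)"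
| "run A (Havoc x) = (\<lambda>t \<sigma>. case t of TH \<alpha> \<Rightarrow> Some (\<sigma>(x := \<alpha>), pone A) | _ \<Rightarrow> None)"
| "run A (Weight w) = (\<lambda>t \<sigma>. if t = TW then Some (\<sigma>, w \<sigma>) else None)"
| "run A (Seq C1 C2) = (\<lambda>t \<sigma>. case t of TS t1 t2 \<Rightarrow>
      (case run A C1 t1 \<sigma> of None \<Rightarrow> None | Some (\<iota>, a) \<Rightarrow>
        (case run A C2 t2 \<iota> of None \<Rightarrow> None | Some (\<tau>, b) \<Rightarrow> Some (\<tau>, pmul A a b))) | _ \<Rightarrow> None)"
| "run A (Choice C1 C2) = (\<lambda>t \<sigma>. case t of TL t1 \<Rightarrow> run A C1 t1 \<sigma> | TR t2 \<Rightarrow> run A C2 t2 \<sigma> | _ \<Rightarrow> None)"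
| "run A (Iter C e e') = (\<lambda>t \<sigma>. case t of TI ts \<Rightarrow>
      (case runP A (run A C) e ts \<sigma> of None \<Rightarrow> None | Some (\<tau>, b) \<Rightarrow> Some (\<tau>, pmul A b (e' \<tau>))) | _ \<Rightarrow> None)"

definition ok where "ok A C \<sigma> t \<longleftrightarrow> run A C t \<sigma> \<noteq> None"
definition en where "en A C \<sigma> t = fst (the (run A C t \<sigma>))"
definition wt where "wt A C \<sigma> t = snd (the (run A C t \<sigma>))"

definition Isp where "Isp A C \<tau> = {p. ok A C (fst p) (snd p) \<and> en A C (fst p) (snd p) = \<tau>}"
definition Jwp where "Jwp A C \<sigma> = {t. ok A C \<sigma> t}"

definition SPsum where "SPsum A C \<mu> \<tau> = isum A (\<lambda>p. pmul A (\<mu> (fst p)) (wt A C (fst p) (snd p))) (Isp A C \<tau>)"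
definition WPsum where "WPsum A C g \<sigma> = isum A (\<lambda>t. pmul A (wt A C \<sigma> t) (g (en A C \<sigma> t))) (Jwp A C \<sigma>)"

definition P1sp where "P1sp A C \<longleftrightarrow> (\<forall>\<mu> s. sp A C \<mu> = Some s \<longrightarrow> (\<forall>\<tau>. SPsum A C \<mu> \<tau> = Some (s \<tau>)))"
definition P1wp where "P1wp A C \<longleftrightarrow> (\<forall>g w. wp A C g = Some w \<longrightarrow> (\<forall>\<sigma>. WPsum A C g \<sigma> = Some (w \<sigma>)))"
definition P2sp where "P2sp A C \<longleftrightarrow> (\<forall>\<mu> \<mu>' s. sp A C \<mu> = Some s \<longrightarrow> qle A \<mu>' \<mu> \<longrightarrow> sp A C \<mu>' \<noteq> None)"
definition P2wp where "P2wp A C \<longleftrightarrow> (\<forall>g g' w. wp A C g = Some w \<longrightarrow> qle A g' g \<longrightarrow> wp A C g' \<noteq> None)"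
definition GOOD where "GOOD A C \<longleftrightarrow> P1sp A C \<and> P1wp A C \<and> P2sp A C \<and> P2wp A C"

lemma okE: "ok A C \<sigma> t \<Longrightarrow> run A C t \<sigma> = Some (en A C \<sigma> t, wt A C \<sigma> t)"
  unfolding ok_def en_def wt_def by auto
lemma run_SomeD: "run A C t \<sigma> = Some (\<tau>, a) \<Longrightarrow> ok A C \<sigma> t \<and> en A C \<sigma> t = \<tau> \<and> wt A C \<sigma> t = a"
  unfolding ok_def en_def wt_def by auto

lemma qsum_SomeD: "qsum A F I = Some s \<Longrightarrow> isum A (\<lambda>i. F i \<sigma>) I = Some (s \<sigma>)"
  unfolding qsum_def by (auto split: if_splits)
lemma qsum_SomeI: "(\<And>\<sigma>. isum A (\<lambda>i. F i \<sigma>) I \<noteq> None) \<Longrightarrow> qsum A F I \<noteq> None"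
  unfolding qsum_def by auto
lemma qadd_SomeD: "qadd A f h = Some s \<Longrightarrow> padd A (f \<sigma>) (h \<sigma>) = Some (s \<sigma>)"
  unfolding qadd_def by (auto split: if_splits)
lemma qadd_SomeI: "(\<And>\<sigma>. padd A (f \<sigma>) (h \<sigma>) = Some (s \<sigma>)) \<Longrightarrow> qadd A f h = Some s"
  unfolding qadd_def by auto

context ps begin

lemma isum_reindex_cong:
  assumes "bij_betw h I J" "\<And>i. i \<in> I \<Longrightarrow> f i = g (h i)"
  shows "isum A f I = isum A g J"
  using isum_reindex[OF assms(1), of g] isum_cong[of I f "\<lambda>i. g (h i)"] assms(2) by simp

lemma SP_mono:
  assumes "P1sp A C" "sp A C \<mu> = Some s" "sp A C \<mu>' = Some s'" "qle A \<mu>' \<mu>"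
  shows "qle A s' s"
  unfolding qle_def
proof
  fix \<tau>
  have a: "SPsum A C \<mu> \<tau> = Some (s \<tau>)" "SPsum A C \<mu>' \<tau> = Some (s' \<tau>)" using assms(1-3) unfolding P1sp_def by auto
  have "\<forall>p\<in>Isp A C \<tau>. nle A (pmul A (\<mu>' (fst p)) (wt A C (fst p) (snd p))) (pmul A (\<mu> (fst p)) (wt A C (fst p) (snd p)))"
    using assms(4) mul_mono_r unfolding qle_def by blast
  from isum_mono[OF this a(1)[unfolded SPsum_def]] show "nle A (s' \<tau>) (s \<tau>)" using a(2)[unfolded SPsum_def] by auto
qed

lemma WP_mono:
  assumes "P1wp A C" "wp A C g = Some w" "wp A C g' = Some w'" "qle A g' g"
  shows "qle A w' w"
  unfolding qle_def
proof
  fix \<sigma>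
  have a: "WPsum A C g \<sigma> = Some (w \<sigma>)" "WPsum A C g' \<sigma> = Some (w' \<sigma>)" using assms(1-3) unfolding P1wp_def by auto
  have "\<forall>t\<in>Jwp A C \<sigma>. nle A (pmul A (wt A C \<sigma> t) (g' (en A C \<sigma> t))) (pmul A (wt A C \<sigma> t) (g (en A C \<sigma> t)))"
    using assms(4) mul_mono_l unfolding qle_def by blast
  from isum_mono[OF this a(1)[unfolded WPsum_def]] show "nle A (w' \<sigma>) (w \<sigma>)" using a(2)[unfolded WPsum_def] by auto
qed

lemma SP_mono2:
  assumes "GOOD A C" "sp A C \<mu> = Some s" "qle A \<mu>' \<mu>"
  shows "\<exists>s'. sp A C \<mu>' = Some s' \<and> qle A s' s"
proof -
  obtain s' where s': "sp A C \<mu>' = Some s'" using assms unfolding GOOD_def P2sp_def by blast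
  then show ?thesis using SP_mono[OF _ assms(2) s' assms(3)] assms(1) unfolding GOOD_def by blast
qed

lemma WP_mono2:
  assumes "GOOD A C" "wp A C g = Some w" "qle A g' g"
  shows "\<exists>w'. wp A C g' = Some w' \<and> qle A w' w"
proof -
  obtain w' where w': "wp A C g' = Some w'" using assms unfolding GOOD_def P2wp_def by blast
  then show ?thesis using WP_mono[OF _ assms(2) w' assms(3)] assms(1) unfolding GOOD_def by blast
qed

end


context ps begin

lemma GOOD_Assign: "GOOD A (Assign x e)"
proof -
  have okA: "ok A (Assign x e) \<sigma> t \<longleftrightarrow> t = TA" for \<sigma> t unfolding ok_def by simp
  have enA: "en A (Assign x e) \<sigma> TA = \<sigma>(x := e \<sigma>)" for \<sigma> unfolding en_def by simp
  have wtA: "wt A (Assign x e) \<sigma> TA = pone A" for \<sigma> unfolding wt_def by simp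
  have p1: "P1sp A (Assign x e)" unfolding P1sp_def
  proof (intro allI impI)
    fix \<mu> s \<tau> assume sp: "sp A (Assign x e) \<mu> = Some s"
    let ?F = "\<lambda>\<alpha>. pmul A (\<mu> (\<tau>(x := \<alpha>))) (iverson A (\<tau> x = e (\<tau>(x := \<alpha>))))"
    have s: "isum A ?F UNIV = Some (s \<tau>)" using qsum_SomeD[OF sp[simplified]] by simp
    let ?S = "{\<alpha>. \<tau> x = e (\<tau>(x := \<alpha>))}"
    have z: "isum A ?F ?S = isum A ?F UNIV" by (rule isum_zero_ext) (auto simp: iverson_def)
    let ?h = "\<lambda>\<alpha>. (\<tau>(x := \<alpha>), TA)"
    have bij: "bij_betw ?h ?S (Isp A (Assign x e) \<tau>)"
    proof (rule bij_betw_byWitness[where f' = "\<lambda>p. fst p x"])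
      show "\<forall>a\<in>?S. fst (?h a) x = a" by simp
      show "\<forall>p\<in>Isp A (Assign x e) \<tau>. ?h (fst p x) = p"
      proof
        fix p assume "p \<in> Isp A (Assign x e) \<tau>"
        then obtain \<sigma> where p: "p = (\<sigma>, TA)" "\<sigma>(x := e \<sigma>) = \<tau>" unfolding Isp_def using okA enA
          by (cases p) auto
        then show "?h (fst p x) = p" by auto
      qed
      show "?h ` ?S \<subseteq> Isp A (Assign x e) \<tau>" unfolding Isp_def using okA enA by auto
      show "(\<lambda>p. fst p x) ` Isp A (Assign x e) \<tau> \<subseteq> ?S"
      proof
        fix a assume "a \<in> (\<lambda>p. fst p x) ` Isp A (Assign x e) \<tau>"
        then obtain p where "p \<in> Isp A (Assign x e) \<tau>" "a = fst p x" by blast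
        then obtain \<sigma> where p: "p = (\<sigma>, TA)" "\<sigma>(x := e \<sigma>) = \<tau>" "a = \<sigma> x" unfolding Isp_def using okA enA
          by (cases p) auto
        then have "\<tau>(x := a) = \<sigma>" by auto
        then show "a \<in> ?S" using p by auto
      qed
    qed
    have "isum A ?F ?S = SPsum A (Assign x e) \<mu> \<tau>"
      unfolding SPsum_def by (rule isum_reindex_cong[OF bij]) (simp add: wtA iverson_def)
    then show "SPsum A (Assign x e) \<mu> \<tau> = Some (s \<tau>)" using z s by simp
  qed
  have p1w: "P1wp A (Assign x e)" unfolding P1wp_def
  proof (intro allI impI)
    fix g w \<sigma> assume "wp A (Assign x e) g = Some w"
    then have w: "w = (\<lambda>\<sigma>. g (\<sigma>(x := e \<sigma>)))" by simp
    have "Jwp A (Assign x e) \<sigma> = {TA}" unfolding Jwp_def using okA by auto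
    then show "WPsum A (Assign x e) g \<sigma> = Some (w \<sigma>)" unfolding WPsum_def using w wtA enA by simp
  qed
  have p2: "P2sp A (Assign x e)" unfolding P2sp_def
  proof (intro allI impI)
    fix \<mu> \<mu>' s assume sp: "sp A (Assign x e) \<mu> = Some s" and le: "qle A \<mu>' \<mu>"
    show "sp A (Assign x e) \<mu>' \<noteq> None"
      unfolding sp.simps
    proof (rule qsum_SomeI)
      fix \<tau>
      have s: "isum A (\<lambda>\<alpha>. pmul A (\<mu> (\<tau>(x := \<alpha>))) (iverson A (\<tau> x = e (\<tau>(x := \<alpha>))))) UNIV = Some (s \<tau>)"
        using qsum_SomeD[OF sp[simplified]] by simp
      have "\<forall>\<alpha>\<in>UNIV. nle A (pmul A (\<mu>' (\<tau>(x := \<alpha>))) (iverson A (\<tau> x = e (\<tau>(x := \<alpha>)))))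
               (pmul A (\<mu> (\<tau>(x := \<alpha>))) (iverson A (\<tau> x = e (\<tau>(x := \<alpha>)))))"
        using le mul_mono_r unfolding qle_def by blast
      from isum_mono[OF this s] show "isum A (\<lambda>\<alpha>. pmul A (\<mu>' (\<tau>(x := \<alpha>))) (iverson A (\<tau> x = e (\<tau>(x := \<alpha>))))) UNIV \<noteq> None"
        by auto
    qed
  qed
  have p2w: "P2wp A (Assign x e)" unfolding P2wp_def by simp
  show ?thesis unfolding GOOD_def using p1 p1w p2 p2w by blast
qed

lemma GOOD_Havoc: "GOOD A (Havoc x)"
proof -
  have okH: "ok A (Havoc x) \<sigma> t \<longleftrightarrow> (\<exists>\<alpha>. t = TH \<alpha>)" for \<sigma> t unfolding ok_def by (cases t) auto
  have enH: "en A (Havoc x) \<sigma> (TH \<alpha>) = \<sigma>(x := \<alpha>)" for \<sigma> \<alpha> unfolding en_def by simp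
  have wtH: "wt A (Havoc x) \<sigma> (TH \<alpha>) = pone A" for \<sigma> \<alpha> unfolding wt_def by simp
  have p1: "P1sp A (Havoc x)" unfolding P1sp_def
  proof (intro allI impI)
    fix \<mu> s \<tau> assume sp: "sp A (Havoc x) \<mu> = Some s"
    have s: "isum A (\<lambda>\<alpha>. \<mu> (\<tau>(x := \<alpha>))) UNIV = Some (s \<tau>)" using qsum_SomeD[OF sp[simplified]] by simp
    let ?h = "\<lambda>\<beta>. (\<tau>(x := \<beta>), TH (\<tau> x))"
    have bij: "bij_betw ?h UNIV (Isp A (Havoc x) \<tau>)"
    proof (rule bij_betw_byWitness[where f' = "\<lambda>p. fst p x"])
      show "\<forall>a\<in>UNIV. fst (?h a) x = a" by simp
      show "\<forall>p\<in>Isp A (Havoc x) \<tau>. ?h (fst p x) = p"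
      proof
        fix p assume "p \<in> Isp A (Havoc x) \<tau>"
        then obtain \<sigma> \<alpha> where p: "p = (\<sigma>, TH \<alpha>)" "\<sigma>(x := \<alpha>) = \<tau>" unfolding Isp_def using okH enH
          by (cases p) fastforce
        then show "?h (fst p x) = p" by auto
      qed
      show "?h ` UNIV \<subseteq> Isp A (Havoc x) \<tau>" unfolding Isp_def using okH enH by auto
      show "(\<lambda>p. fst p x) ` Isp A (Havoc x) \<tau> \<subseteq> UNIV" by simp
    qed
    have "isum A (\<lambda>\<alpha>. \<mu> (\<tau>(x := \<alpha>))) UNIV = SPsum A (Havoc x) \<mu> \<tau>"
      unfolding SPsum_def by (rule isum_reindex_cong[OF bij]) (simp add: wtH)
    then show "SPsum A (Havoc x) \<mu> \<tau> = Some (s \<tau>)" using s by simp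
  qed
  have p1w: "P1wp A (Havoc x)" unfolding P1wp_def
  proof (intro allI impI)
    fix g w \<sigma> assume wp: "wp A (Havoc x) g = Some w"
    have s: "isum A (\<lambda>\<alpha>. g (\<sigma>(x := \<alpha>))) UNIV = Some (w \<sigma>)" using qsum_SomeD[OF wp[simplified]] by simp
    have bij: "bij_betw TH UNIV (Jwp A (Havoc x) \<sigma>)"
      unfolding bij_betw_def Jwp_def using okH by (auto simp: inj_on_def)
    have "isum A (\<lambda>\<alpha>. g (\<sigma>(x := \<alpha>))) UNIV = WPsum A (Havoc x) g \<sigma>"
      unfolding WPsum_def by (rule isum_reindex_cong[OF bij]) (simp add: wtH enH)
    then show "WPsum A (Havoc x) g \<sigma> = Some (w \<sigma>)" using s by simp
  qed
  have p2: "P2sp A (Havoc x)" unfolding P2sp_def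
  proof (intro allI impI)
    fix \<mu> \<mu>' s assume sp: "sp A (Havoc x) \<mu> = Some s" and le: "qle A \<mu>' \<mu>"
    show "sp A (Havoc x) \<mu>' \<noteq> None"
      unfolding sp.simps
    proof (rule qsum_SomeI)
      fix \<tau>
      have s: "isum A (\<lambda>\<alpha>. \<mu> (\<tau>(x := \<alpha>))) UNIV = Some (s \<tau>)" using qsum_SomeD[OF sp[simplified]] by simp
      have "\<forall>\<alpha>\<in>UNIV. nle A (\<mu>' (\<tau>(x := \<alpha>))) (\<mu> (\<tau>(x := \<alpha>)))" using le unfolding qle_def by blast
      from isum_mono[OF this s] show "isum A (\<lambda>\<alpha>. \<mu>' (\<tau>(x := \<alpha>))) UNIV \<noteq> None" by auto
    qed
  qed
  have p2w: "P2wp A (Havoc x)" unfolding P2wp_def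
  proof (intro allI impI)
    fix g g' w assume wp: "wp A (Havoc x) g = Some w" and le: "qle A g' g"
    show "wp A (Havoc x) g' \<noteq> None"
      unfolding wp.simps
    proof (rule qsum_SomeI)
      fix \<tau>
      have s: "isum A (\<lambda>\<alpha>. g (\<tau>(x := \<alpha>))) UNIV = Some (w \<tau>)" using qsum_SomeD[OF wp[simplified]] by simp
      have "\<forall>\<alpha>\<in>UNIV. nle A (g' (\<tau>(x := \<alpha>))) (g (\<tau>(x := \<alpha>)))" using le unfolding qle_def by blast
      from isum_mono[OF this s] show "isum A (\<lambda>\<alpha>. g' (\<tau>(x := \<alpha>))) UNIV \<noteq> None" by auto
    qed
  qed
  show ?thesis unfolding GOOD_def using p1 p1w p2 p2w by blast
qed

lemma GOOD_Weight: "GOOD A (Weight v)"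
proof -
  have okW: "ok A (Weight v) \<sigma> t \<longleftrightarrow> t = TW" for \<sigma> t unfolding ok_def by simp
  have enW: "en A (Weight v) \<sigma> TW = \<sigma>" for \<sigma> unfolding en_def by simp
  have wtW: "wt A (Weight v) \<sigma> TW = v \<sigma>" for \<sigma> unfolding wt_def by simp
  have p1: "P1sp A (Weight v)" unfolding P1sp_def
  proof (intro allI impI)
    fix \<mu> s \<tau> assume "sp A (Weight v) \<mu> = Some s"
    then have s: "s = (\<lambda>\<sigma>. pmul A (\<mu> \<sigma>) (v \<sigma>))" by simp
    have "Isp A (Weight v) \<tau> = {(\<tau>, TW)}" unfolding Isp_def using okW enW by auto
    then show "SPsum A (Weight v) \<mu> \<tau> = Some (s \<tau>)" unfolding SPsum_def using s wtW by simp
  qed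
  have p1w: "P1wp A (Weight v)" unfolding P1wp_def
  proof (intro allI impI)
    fix g w \<sigma> assume "wp A (Weight v) g = Some w"
    then have w: "w = (\<lambda>\<sigma>. pmul A (v \<sigma>) (g \<sigma>))" by simp
    have "Jwp A (Weight v) \<sigma> = {TW}" unfolding Jwp_def using okW by auto
    then show "WPsum A (Weight v) g \<sigma> = Some (w \<sigma>)" unfolding WPsum_def using w wtW enW by simp
  qed
  show ?thesis unfolding GOOD_def P2sp_def P2wp_def using p1 p1w by simp
qed

end


context ps begin

lemma okSeq: "ok A (Seq C1 C2) \<sigma> t \<longleftrightarrow> (\<exists>t1 t2. t = TS t1 t2 \<and> ok A C1 \<sigma> t1 \<and> ok A C2 (en A C1 \<sigma> t1) t2)"
  unfolding ok_def en_def by (cases t) (auto split: option.splits)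
lemma enSeq: "ok A C1 \<sigma> t1 \<Longrightarrow> ok A C2 (en A C1 \<sigma> t1) t2 \<Longrightarrow>
   en A (Seq C1 C2) \<sigma> (TS t1 t2) = en A C2 (en A C1 \<sigma> t1) t2"
  unfolding ok_def en_def by (auto split: option.splits)
lemma wtSeq: "ok A C1 \<sigma> t1 \<Longrightarrow> ok A C2 (en A C1 \<sigma> t1) t2 \<Longrightarrow>
   wt A (Seq C1 C2) \<sigma> (TS t1 t2) = pmul A (wt A C1 \<sigma> t1) (wt A C2 (en A C1 \<sigma> t1) t2)"
  unfolding ok_def en_def wt_def by (auto split: option.splits)

lemma GOOD_Seq:
  assumes G1: "GOOD A C1" and G2: "GOOD A C2"
  shows "GOOD A (Seq C1 C2)"
proof -
  have p1: "P1sp A (Seq C1 C2)" unfolding P1sp_def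
  proof (intro allI impI)
    fix \<mu> s \<tau> assume sp: "sp A (Seq C1 C2) \<mu> = Some s"
    then obtain s1 where s1: "sp A C1 \<mu> = Some s1" "sp A C2 s1 = Some s" by (cases "sp A C1 \<mu>") auto
    have IH2: "SPsum A C2 s1 \<tau> = Some (s \<tau>)" using G2 s1(2) unfolding GOOD_def P1sp_def by blast
    have IH1: "\<And>\<iota>. SPsum A C1 \<mu> \<iota> = Some (s1 \<iota>)" using G1 s1(1) unfolding GOOD_def P1sp_def by blast
    define f where "f q p = pmul A (pmul A (\<mu> (fst p)) (wt A C1 (fst p) (snd p))) (wt A C2 (fst q) (snd q))" for q p
    have inner: "isum A (f q) (Isp A C1 (fst q)) = Some (pmul A (s1 (fst q)) (wt A C2 (fst q) (snd q)))" for q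
      unfolding f_def using isum_mult_r[OF IH1[unfolded SPsum_def]] by blast
    have sig: "isum A (\<lambda>r. f (fst r) (snd r)) (Sigma (Isp A C2 \<tau>) (\<lambda>q. Isp A C1 (fst q))) = Some (s \<tau>)"
      using isum_sigma[of f "Isp A C2 \<tau>" "\<lambda>q. Isp A C1 (fst q)"] inner IH2[unfolded SPsum_def] by simp
    let ?h = "\<lambda>r::(('a \<Rightarrow> nat) \<times> tr) \<times> (('a \<Rightarrow> nat) \<times> tr). (fst (snd r), TS (snd (snd r)) (snd (fst r)))"
    let ?h' = "\<lambda>p::('a \<Rightarrow> nat) \<times> tr. case snd p of TS t1 t2 \<Rightarrow> ((en A C1 (fst p) t1, t2), (fst p, t1)) | _ \<Rightarrow> undefined"
    have bij: "bij_betw ?h (Sigma (Isp A C2 \<tau>) (\<lambda>q. Isp A C1 (fst q))) (Isp A (Seq C1 C2) \<tau>)"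
    proof (rule bij_betw_byWitness[where f' = ?h'])
      show "\<forall>r\<in>Sigma (Isp A C2 \<tau>) (\<lambda>q. Isp A C1 (fst q)). ?h' (?h r) = r"
        unfolding Isp_def by auto
      show "\<forall>p\<in>Isp A (Seq C1 C2) \<tau>. ?h (?h' p) = p"
        unfolding Isp_def okSeq by auto
      show "?h ` Sigma (Isp A C2 \<tau>) (\<lambda>q. Isp A C1 (fst q)) \<subseteq> Isp A (Seq C1 C2) \<tau>"
        unfolding Isp_def by (auto simp: okSeq enSeq)
      show "?h' ` Isp A (Seq C1 C2) \<tau> \<subseteq> Sigma (Isp A C2 \<tau>) (\<lambda>q. Isp A C1 (fst q))"
        unfolding Isp_def okSeq by (auto simp: enSeq)
    qed
    have "isum A (\<lambda>r. f (fst r) (snd r)) (Sigma (Isp A C2 \<tau>) (\<lambda>q. Isp A C1 (fst q))) = SPsum A (Seq C1 C2) \<mu> \<tau>"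
      unfolding SPsum_def
    proof (rule isum_reindex_cong[OF bij])
      fix r assume "r \<in> Sigma (Isp A C2 \<tau>) (\<lambda>q. Isp A C1 (fst q))"
      then show "f (fst r) (snd r) = pmul A (\<mu> (fst (?h r))) (wt A (Seq C1 C2) (fst (?h r)) (snd (?h r)))"
        unfolding Isp_def f_def by (auto simp: wtSeq massoc)
    qed
    then show "SPsum A (Seq C1 C2) \<mu> \<tau> = Some (s \<tau>)" using sig by simp
  qed
  have p1w: "P1wp A (Seq C1 C2)" unfolding P1wp_def
  proof (intro allI impI)
    fix g w \<sigma> assume wp: "wp A (Seq C1 C2) g = Some w"
    then obtain w2 where w2: "wp A C2 g = Some w2" "wp A C1 w2 = Some w" by (cases "wp A C2 g") auto
    have IH2: "\<And>\<iota>. WPsum A C2 g \<iota> = Some (w2 \<iota>)" using G2 w2(1) unfolding GOOD_def P1wp_def by blast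
    have IH1: "WPsum A C1 w2 \<sigma> = Some (w \<sigma>)" using G1 w2(2) unfolding GOOD_def P1wp_def by blast
    define f where "f t1 t2 = pmul A (wt A C1 \<sigma> t1) (pmul A (wt A C2 (en A C1 \<sigma> t1) t2) (g (en A C2 (en A C1 \<sigma> t1) t2)))" for t1 t2
    have inner: "isum A (f t1) (Jwp A C2 (en A C1 \<sigma> t1)) = Some (pmul A (wt A C1 \<sigma> t1) (w2 (en A C1 \<sigma> t1)))" for t1
      unfolding f_def using isum_mult_l[OF IH2[unfolded WPsum_def]] by blast
    have sig: "isum A (\<lambda>r. f (fst r) (snd r)) (Sigma (Jwp A C1 \<sigma>) (\<lambda>t1. Jwp A C2 (en A C1 \<sigma> t1))) = Some (w \<sigma>)"
      using isum_sigma[of f "Jwp A C1 \<sigma>" "\<lambda>t1. Jwp A C2 (en A C1 \<sigma> t1)"] inner IH1[unfolded WPsum_def] by simp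
    let ?h = "\<lambda>r. TS (fst r) (snd r)"
    let ?h' = "\<lambda>t. case t of TS t1 t2 \<Rightarrow> (t1, t2) | _ \<Rightarrow> undefined"
    have bij: "bij_betw ?h (Sigma (Jwp A C1 \<sigma>) (\<lambda>t1. Jwp A C2 (en A C1 \<sigma> t1))) (Jwp A (Seq C1 C2) \<sigma>)"
    proof (rule bij_betw_byWitness[where f' = ?h'])
      show "\<forall>r\<in>Sigma (Jwp A C1 \<sigma>) (\<lambda>t1. Jwp A C2 (en A C1 \<sigma> t1)). ?h' (?h r) = r" by auto
      show "\<forall>p\<in>Jwp A (Seq C1 C2) \<sigma>. ?h (?h' p) = p" unfolding Jwp_def okSeq by auto
      show "?h ` Sigma (Jwp A C1 \<sigma>) (\<lambda>t1. Jwp A C2 (en A C1 \<sigma> t1)) \<subseteq> Jwp A (Seq C1 C2) \<sigma>"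
        unfolding Jwp_def okSeq by auto
      show "?h' ` Jwp A (Seq C1 C2) \<sigma> \<subseteq> Sigma (Jwp A C1 \<sigma>) (\<lambda>t1. Jwp A C2 (en A C1 \<sigma> t1))"
        unfolding Jwp_def okSeq by auto
    qed
    have "isum A (\<lambda>r. f (fst r) (snd r)) (Sigma (Jwp A C1 \<sigma>) (\<lambda>t1. Jwp A C2 (en A C1 \<sigma> t1))) = WPsum A (Seq C1 C2) g \<sigma>"
      unfolding WPsum_def
    proof (rule isum_reindex_cong[OF bij])
      fix r assume "r \<in> Sigma (Jwp A C1 \<sigma>) (\<lambda>t1. Jwp A C2 (en A C1 \<sigma> t1))"
      then show "f (fst r) (snd r) = pmul A (wt A (Seq C1 C2) \<sigma> (?h r)) (g (en A (Seq C1 C2) \<sigma> (?h r)))"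
        unfolding Jwp_def f_def by (auto simp: wtSeq enSeq massoc)
    qed
    then show "WPsum A (Seq C1 C2) g \<sigma> = Some (w \<sigma>)" using sig by simp
  qed
  have p2: "P2sp A (Seq C1 C2)" unfolding P2sp_def
  proof (intro allI impI)
    fix \<mu> \<mu>' s assume sp: "sp A (Seq C1 C2) \<mu> = Some s" and le: "qle A \<mu>' \<mu>"
    then obtain s1 where s1: "sp A C1 \<mu> = Some s1" "sp A C2 s1 = Some s" by (cases "sp A C1 \<mu>") auto
    obtain s1' where s1': "sp A C1 \<mu>' = Some s1'" "qle A s1' s1" using SP_mono2[OF G1 s1(1) le] by blast
    obtain s' where "sp A C2 s1' = Some s'" using SP_mono2[OF G2 s1(2) s1'(2)] by blast
    then show "sp A (Seq C1 C2) \<mu>' \<noteq> None" using s1' by simp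
  qed
  have p2w: "P2wp A (Seq C1 C2)" unfolding P2wp_def
  proof (intro allI impI)
    fix g g' w assume wp: "wp A (Seq C1 C2) g = Some w" and le: "qle A g' g"
    then obtain w2 where w2: "wp A C2 g = Some w2" "wp A C1 w2 = Some w" by (cases "wp A C2 g") auto
    obtain w2' where w2': "wp A C2 g' = Some w2'" "qle A w2' w2" using WP_mono2[OF G2 w2(1) le] by blast
    obtain w' where "wp A C1 w2' = Some w'" using WP_mono2[OF G1 w2(2) w2'(2)] by blast
    then show "wp A (Seq C1 C2) g' \<noteq> None" using w2' by simp
  qed
  show ?thesis unfolding GOOD_def using p1 p1w p2 p2w by blast
qed

lemma okCh: "ok A (Choice C1 C2) \<sigma> t \<longleftrightarrow> (\<exists>t1. t = TL t1 \<and> ok A C1 \<sigma> t1) \<or> (\<exists>t2. t = TR t2 \<and> ok A C2 \<sigma> t2)"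
  unfolding ok_def by (cases t) auto
lemma enCh[simp]: "en A (Choice C1 C2) \<sigma> (TL t) = en A C1 \<sigma> t" "en A (Choice C1 C2) \<sigma> (TR t) = en A C2 \<sigma> t"
  unfolding en_def by auto
lemma wtCh[simp]: "wt A (Choice C1 C2) \<sigma> (TL t) = wt A C1 \<sigma> t" "wt A (Choice C1 C2) \<sigma> (TR t) = wt A C2 \<sigma> t"
  unfolding wt_def by auto

lemma GOOD_Choice:
  assumes G1: "GOOD A C1" and G2: "GOOD A C2"
  shows "GOOD A (Choice C1 C2)"
proof -
  have p1: "P1sp A (Choice C1 C2)" unfolding P1sp_def
  proof (intro allI impI)
    fix \<mu> s \<tau> assume sp: "sp A (Choice C1 C2) \<mu> = Some s"
    then obtain s1 s2 where s12: "sp A C1 \<mu> = Some s1" "sp A C2 \<mu> = Some s2" "qadd A s1 s2 = Some s"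
      by (cases "sp A C1 \<mu>"; cases "sp A C2 \<mu>") auto
    have I1: "SPsum A C1 \<mu> \<tau> = Some (s1 \<tau>)" using G1 s12(1) unfolding GOOD_def P1sp_def by blast
    have I2: "SPsum A C2 \<mu> \<tau> = Some (s2 \<tau>)" using G2 s12(2) unfolding GOOD_def P1sp_def by blast
    let ?h1 = "\<lambda>p::('a \<Rightarrow> nat) \<times> tr. (fst p, TL (snd p))"
    let ?h2 = "\<lambda>p::('a \<Rightarrow> nat) \<times> tr. (fst p, TR (snd p))"
    have e: "Isp A (Choice C1 C2) \<tau> = ?h1 ` Isp A C1 \<tau> \<union> ?h2 ` Isp A C2 \<tau>"
    proof (rule set_eqI)
      fix p :: "('a \<Rightarrow> nat) \<times> tr"
      obtain \<sigma> t where p: "p = (\<sigma>, t)" by (cases p)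
      show "p \<in> Isp A (Choice C1 C2) \<tau> \<longleftrightarrow> p \<in> ?h1 ` Isp A C1 \<tau> \<union> ?h2 ` Isp A C2 \<tau>"
        unfolding p Isp_def okCh by (cases t) (auto simp: image_iff)
    qed
    have dj: "?h1 ` Isp A C1 \<tau> \<inter> ?h2 ` Isp A C2 \<tau> = {}" by auto
    have b1: "bij_betw ?h1 (Isp A C1 \<tau>) (?h1 ` Isp A C1 \<tau>)" by (auto simp: bij_betw_def inj_on_def)
    have b2: "bij_betw ?h2 (Isp A C2 \<tau>) (?h2 ` Isp A C2 \<tau>)" by (auto simp: bij_betw_def inj_on_def)
    have r1: "isum A (\<lambda>p. pmul A (\<mu> (fst p)) (wt A (Choice C1 C2) (fst p) (snd p))) (?h1 ` Isp A C1 \<tau>) = Some (s1 \<tau>)"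
      unfolding I1[unfolded SPsum_def, symmetric] by (rule isum_reindex_cong[OF b1, symmetric]) simp
    have r2: "isum A (\<lambda>p. pmul A (\<mu> (fst p)) (wt A (Choice C1 C2) (fst p) (snd p))) (?h2 ` Isp A C2 \<tau>) = Some (s2 \<tau>)"
      unfolding I2[unfolded SPsum_def, symmetric] by (rule isum_reindex_cong[OF b2, symmetric]) simp
    show "SPsum A (Choice C1 C2) \<mu> \<tau> = Some (s \<tau>)"
      unfolding SPsum_def e isum_union[OF dj] r1 r2 using qadd_SomeD[OF s12(3)] by simp
  qed
  have p1w: "P1wp A (Choice C1 C2)" unfolding P1wp_def
  proof (intro allI impI)
    fix g w \<sigma> assume wp: "wp A (Choice C1 C2) g = Some w"
    then obtain w1 w2 where w12: "wp A C1 g = Some w1" "wp A C2 g = Some w2" "qadd A w1 w2 = Some w"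
      by (cases "wp A C1 g"; cases "wp A C2 g") auto
    have I1: "WPsum A C1 g \<sigma> = Some (w1 \<sigma>)" using G1 w12(1) unfolding GOOD_def P1wp_def by blast
    have I2: "WPsum A C2 g \<sigma> = Some (w2 \<sigma>)" using G2 w12(2) unfolding GOOD_def P1wp_def by blast
    have e: "Jwp A (Choice C1 C2) \<sigma> = TL ` Jwp A C1 \<sigma> \<union> TR ` Jwp A C2 \<sigma>"
    proof (rule set_eqI)
      fix t
      show "t \<in> Jwp A (Choice C1 C2) \<sigma> \<longleftrightarrow> t \<in> TL ` Jwp A C1 \<sigma> \<union> TR ` Jwp A C2 \<sigma>"
        unfolding Jwp_def okCh by (cases t) auto
    qed
    have dj: "TL ` Jwp A C1 \<sigma> \<inter> TR ` Jwp A C2 \<sigma> = {}" by auto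
    have b1: "bij_betw TL (Jwp A C1 \<sigma>) (TL ` Jwp A C1 \<sigma>)" by (auto simp: bij_betw_def inj_on_def)
    have b2: "bij_betw TR (Jwp A C2 \<sigma>) (TR ` Jwp A C2 \<sigma>)" by (auto simp: bij_betw_def inj_on_def)
    have r1: "isum A (\<lambda>t. pmul A (wt A (Choice C1 C2) \<sigma> t) (g (en A (Choice C1 C2) \<sigma> t))) (TL ` Jwp A C1 \<sigma>) = Some (w1 \<sigma>)"
      unfolding I1[unfolded WPsum_def, symmetric] by (rule isum_reindex_cong[OF b1, symmetric]) simp
    have r2: "isum A (\<lambda>t. pmul A (wt A (Choice C1 C2) \<sigma> t) (g (en A (Choice C1 C2) \<sigma> t))) (TR ` Jwp A C2 \<sigma>) = Some (w2 \<sigma>)"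
      unfolding I2[unfolded WPsum_def, symmetric] by (rule isum_reindex_cong[OF b2, symmetric]) simp
    show "WPsum A (Choice C1 C2) g \<sigma> = Some (w \<sigma>)"
      unfolding WPsum_def e isum_union[OF dj] r1 r2 using qadd_SomeD[OF w12(3)] by simp
  qed
  have p2: "P2sp A (Choice C1 C2)" unfolding P2sp_def
  proof (intro allI impI)
    fix \<mu> \<mu>' s assume sp: "sp A (Choice C1 C2) \<mu> = Some s" and le: "qle A \<mu>' \<mu>"
    then obtain s1 s2 where s12: "sp A C1 \<mu> = Some s1" "sp A C2 \<mu> = Some s2" "qadd A s1 s2 = Some s"
      by (cases "sp A C1 \<mu>"; cases "sp A C2 \<mu>") auto
    obtain s1' where s1': "sp A C1 \<mu>' = Some s1'" "qle A s1' s1" using SP_mono2[OF G1 s12(1) le] by blast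
    obtain s2' where s2': "sp A C2 \<mu>' = Some s2'" "qle A s2' s2" using SP_mono2[OF G2 s12(2) le] by blast
    have "\<forall>\<tau>. \<exists>c. padd A (s1' \<tau>) (s2' \<tau>) = Some c"
      using add_mono s1'(2) s2'(2) qadd_SomeD[OF s12(3)] unfolding qle_def by blast
    then obtain c where "\<And>\<tau>. padd A (s1' \<tau>) (s2' \<tau>) = Some (c \<tau>)" by (metis choice)
    then have "qadd A s1' s2' = Some c" by (rule qadd_SomeI)
    then show "sp A (Choice C1 C2) \<mu>' \<noteq> None" using s1' s2' by simp
  qed
  have p2w: "P2wp A (Choice C1 C2)" unfolding P2wp_def
  proof (intro allI impI)
    fix g g' w assume wp: "wp A (Choice C1 C2) g = Some w" and le: "qle A g' g"
    then obtain w1 w2 where w12: "wp A C1 g = Some w1" "wp A C2 g = Some w2" "qadd A w1 w2 = Some w"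
      by (cases "wp A C1 g"; cases "wp A C2 g") auto
    obtain w1' where w1': "wp A C1 g' = Some w1'" "qle A w1' w1" using WP_mono2[OF G1 w12(1) le] by blast
    obtain w2' where w2': "wp A C2 g' = Some w2'" "qle A w2' w2" using WP_mono2[OF G2 w12(2) le] by blast
    have "\<forall>\<tau>. \<exists>c. padd A (w1' \<tau>) (w2' \<tau>) = Some c"
      using add_mono w1'(2) w2'(2) qadd_SomeD[OF w12(3)] unfolding qle_def by blast
    then obtain c where "\<And>\<tau>. padd A (w1' \<tau>) (w2' \<tau>) = Some (c \<tau>)" by (metis choice)
    then have "qadd A w1' w2' = Some c" by (rule qadd_SomeI)
    then show "wp A (Choice C1 C2) g' \<noteq> None" using w1' w2' by simp
  qed
  show ?thesis unfolding GOOD_def using p1 p1w p2 p2w by blast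
qed

end


definition okP where "okP A C e \<sigma> ts \<longleftrightarrow> runP A (run A C) e ts \<sigma> \<noteq> None"
definition enP where "enP A C e \<sigma> ts = fst (the (runP A (run A C) e ts \<sigma>))"
definition wtP where "wtP A C e \<sigma> ts = snd (the (runP A (run A C) e ts \<sigma>))"

definition PSet where "PSet A C e Q \<tau> = {p. snd p \<in> Q \<and> okP A C e (fst p) (snd p) \<and> enP A C e (fst p) (snd p) = \<tau>}"
definition Xq where "Xq A C e \<mu> Q \<tau> = isum A (\<lambda>p. pmul A (\<mu> (fst p)) (wtP A C e (fst p) (snd p))) (PSet A C e Q \<tau>)"
definition JSet where "JSet A C e Q \<sigma> = {ts. ts \<in> Q \<and> okP A C e \<sigma> ts}"
definition Vq where "Vq A C e h Q \<sigma> = isum A (\<lambda>ts. pmul A (wtP A C e \<sigma> ts) (h (enP A C e \<sigma> ts))) (JSet A C e Q \<sigma>)"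

lemma okP_nil[simp]: "okP A C e \<sigma> []" and enP_nil[simp]: "enP A C e \<sigma> [] = \<sigma>"
  and wtP_nil[simp]: "wtP A C e \<sigma> [] = pone A"
  unfolding okP_def enP_def wtP_def by auto

lemma runP_cons: "runP A (run A C) e (t # ts) \<sigma> = (if ok A C \<sigma> t then
   (case runP A (run A C) e ts (en A C \<sigma> t) of None \<Rightarrow> None
     | Some (\<tau>, b) \<Rightarrow> Some (\<tau>, pmul A (pmul A (e \<sigma>) (wt A C \<sigma> t)) b)) else None)"
proof (cases "run A C t \<sigma>")
  case None then show ?thesis by (simp add: ok_def)
next
  case (Some r)
  obtain a b where r: "r = (a, b)" by (cases r)
  have "ok A C \<sigma> t" "en A C \<sigma> t = a" "wt A C \<sigma> t = b" using run_SomeD[of A C t \<sigma> a b] Some r by auto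
  then show ?thesis using Some r by (cases "runP A (run A C) e ts a") auto
qed

lemma okP_cons: "okP A C e \<sigma> (t # ts) \<longleftrightarrow> ok A C \<sigma> t \<and> okP A C e (en A C \<sigma> t) ts"
  unfolding okP_def runP_cons by (auto split: option.splits)
lemma enP_cons: "ok A C \<sigma> t \<Longrightarrow> okP A C e (en A C \<sigma> t) ts \<Longrightarrow> enP A C e \<sigma> (t # ts) = enP A C e (en A C \<sigma> t) ts"
  unfolding okP_def enP_def runP_cons by (auto split: option.splits)
lemma wtP_cons: "ok A C \<sigma> t \<Longrightarrow> okP A C e (en A C \<sigma> t) ts \<Longrightarrow>
   wtP A C e \<sigma> (t # ts) = pmul A (pmul A (e \<sigma>) (wt A C \<sigma> t)) (wtP A C e (en A C \<sigma> t) ts)"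
  unfolding okP_def enP_def wtP_def runP_cons by (auto split: option.splits)

lemma okIter: "ok A (Iter C e e') \<sigma> t \<longleftrightarrow> (\<exists>ts. t = TI ts \<and> okP A C e \<sigma> ts)"
  unfolding ok_def okP_def by (cases t) (auto split: option.splits)
lemma enIter: "okP A C e \<sigma> ts \<Longrightarrow> en A (Iter C e e') \<sigma> (TI ts) = enP A C e \<sigma> ts"
  unfolding en_def okP_def enP_def by (auto split: option.splits)
lemma wtIter: assumes "okP A C e \<sigma> ts" shows "wt A (Iter C e e') \<sigma> (TI ts) = pmul A (wtP A C e \<sigma> ts) (e' (enP A C e \<sigma> ts))"
proof -
  obtain a b where ab: "runP A (run A C) e ts \<sigma> = Some (a, b)" using assms unfolding okP_def by auto
  then have "enP A C e \<sigma> ts = a" "wtP A C e \<sigma> ts = b" unfolding enP_def wtP_def by auto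
  moreover have "run A (Iter C e e') (TI ts) \<sigma> = Some (a, pmul A b (e' a))" using ab by simp
  ultimately show ?thesis unfolding wt_def by simp
qed

context ps begin

lemma snoc_all:
  "(okP A C e \<sigma> (ts @ [t]) \<longleftrightarrow> okP A C e \<sigma> ts \<and> ok A C (enP A C e \<sigma> ts) t) \<and>
   (okP A C e \<sigma> ts \<longrightarrow> ok A C (enP A C e \<sigma> ts) t \<longrightarrow>
      enP A C e \<sigma> (ts @ [t]) = en A C (enP A C e \<sigma> ts) t \<and>
      wtP A C e \<sigma> (ts @ [t]) = pmul A (wtP A C e \<sigma> ts) (pmul A (e (enP A C e \<sigma> ts)) (wt A C (enP A C e \<sigma> ts) t)))"
proof (induction ts arbitrary: \<sigma>)
  case Nil
  show ?case by (auto simp: okP_cons enP_cons wtP_cons)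
next
  case (Cons t0 ts)
  show ?case
  proof (cases "ok A C \<sigma> t0")
    case False then show ?thesis by (simp add: okP_cons)
  next
    case True
    note IH = Cons.IH[of "en A C \<sigma> t0"]
    show ?thesis using True IH by (auto simp: okP_cons enP_cons wtP_cons massoc)
  qed
qed

lemma okP_snoc: "okP A C e \<sigma> (ts @ [t]) \<longleftrightarrow> okP A C e \<sigma> ts \<and> ok A C (enP A C e \<sigma> ts) t"
  using snoc_all by blast
lemma enP_snoc: "okP A C e \<sigma> ts \<Longrightarrow> ok A C (enP A C e \<sigma> ts) t \<Longrightarrow> enP A C e \<sigma> (ts @ [t]) = en A C (enP A C e \<sigma> ts) t"
  using snoc_all by blast
lemma wtP_snoc: "okP A C e \<sigma> ts \<Longrightarrow> ok A C (enP A C e \<sigma> ts) t \<Longrightarrow>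
  wtP A C e \<sigma> (ts @ [t]) = pmul A (wtP A C e \<sigma> ts) (pmul A (e (enP A C e \<sigma> ts)) (wt A C (enP A C e \<sigma> ts) t))"
  using snoc_all by blast

lemma qle_antisym: "qle A X Y \<Longrightarrow> qle A Y X \<Longrightarrow> X = Y"
  unfolding qle_def using antisym by (simp add: fun_eq_iff)

lemma plfp_SomeD: assumes "plfp A \<Phi> = Some L" shows "\<Phi> L = Some L" "\<And>Y. \<Phi> Y = Some Y \<Longrightarrow> qle A L Y"
proof -
  have ex: "\<exists>X. \<Phi> X = Some X \<and> (\<forall>Y. \<Phi> Y = Some Y \<longrightarrow> qle A X Y)" using assms unfolding plfp_def by (auto split: if_splits)
  then obtain X where X: "\<Phi> X = Some X \<and> (\<forall>Y. \<Phi> Y = Some Y \<longrightarrow> qle A X Y)" by blast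
  have "(THE X. \<Phi> X = Some X \<and> (\<forall>Y. \<Phi> Y = Some Y \<longrightarrow> qle A X Y)) = X"
  proof (rule the_equality)
    show "\<Phi> X = Some X \<and> (\<forall>Y. \<Phi> Y = Some Y \<longrightarrow> qle A X Y)" by (rule X)
  next
    fix Z assume "\<Phi> Z = Some Z \<and> (\<forall>Y. \<Phi> Y = Some Y \<longrightarrow> qle A Z Y)"
    then show "Z = X" using X qle_antisym by blast
  qed
  then have "L = X" using assms ex unfolding plfp_def by simp
  then show "\<Phi> L = Some L" "\<And>Y. \<Phi> Y = Some Y \<Longrightarrow> qle A L Y" using X by auto
qed

lemma plfp_SomeI: assumes "\<Phi> X = Some X" "\<And>Y. \<Phi> Y = Some Y \<Longrightarrow> qle A X Y" shows "plfp A \<Phi> = Some X"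
proof -
  have X: "\<Phi> X = Some X \<and> (\<forall>Y. \<Phi> Y = Some Y \<longrightarrow> qle A X Y)" using assms by blast
  have "(THE X. \<Phi> X = Some X \<and> (\<forall>Y. \<Phi> Y = Some Y \<longrightarrow> qle A X Y)) = X"
  proof (rule the_equality)
    show "\<Phi> X = Some X \<and> (\<forall>Y. \<Phi> Y = Some Y \<longrightarrow> qle A X Y)" by (rule X)
  next
    fix Z assume "\<Phi> Z = Some Z \<and> (\<forall>Y. \<Phi> Y = Some Y \<longrightarrow> qle A Z Y)"
    then show "Z = X" using X qle_antisym by blast
  qed
  then show ?thesis using X unfolding plfp_def by auto
qed

end


context ps begin

lemma Qn_snoc: "{[]} \<union> {ts @ [t] | ts t. ts \<in> {ts. length ts < n}} = {ts::tr list. length ts < Suc n}"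
proof (rule set_eqI)
  fix xs :: "tr list"
  show "xs \<in> {[]} \<union> {ts @ [t] | ts t. ts \<in> {ts. length ts < n}} \<longleftrightarrow> xs \<in> {ts. length ts < Suc n}"
    by (cases xs rule: rev_exhaust) auto
qed

lemma UNIV_snoc: "{[]} \<union> {ts @ [t] | ts t. ts \<in> (UNIV :: tr list set)} = UNIV"
proof (rule set_eqI)
  fix xs :: "tr list"
  show "xs \<in> {[]} \<union> {ts @ [t] | ts t. ts \<in> UNIV} \<longleftrightarrow> xs \<in> UNIV"
    by (cases xs rule: rev_exhaust) auto
qed

lemma step_sp:
  assumes G: "GOOD A C" and Z: "\<And>\<iota>. Xq A C e \<mu> Q \<iota> = Some (Z \<iota>)"
    and S: "sp A C (\<lambda>\<sigma>. pmul A (Z \<sigma>) (e \<sigma>)) = Some S"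
  shows "Xq A C e \<mu> ({[]} \<union> {ts @ [t] | ts t. ts \<in> Q}) \<tau> = padd A (\<mu> \<tau>) (S \<tau>)"
proof -
  let ?Q' = "{[]} \<union> {ts @ [t] | ts t. ts \<in> Q}"
  let ?P = "PSet A C e ?Q' \<tau>"
  let ?f = "\<lambda>p. pmul A (\<mu> (fst p)) (wtP A C e (fst p) (snd p))"
  have mem: "(\<tau>, []) \<in> ?P" unfolding PSet_def by simp
  have spl: "?P = {(\<tau>, [])} \<union> (?P - {(\<tau>, [])})" using mem by blast
  have dj: "{(\<tau>, [])} \<inter> (?P - {(\<tau>, [])}) = {}" by blast
  have one: "isum A ?f {(\<tau>, [])} = Some (\<mu> \<tau>)" by simp
  have SP: "SPsum A C (\<lambda>\<sigma>. pmul A (Z \<sigma>) (e \<sigma>)) \<tau> = Some (S \<tau>)" using G S unfolding GOOD_def P1sp_def by blast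
  define F where "F q p = pmul A (pmul A (pmul A (\<mu> (fst p)) (wtP A C e (fst p) (snd p))) (e (fst q))) (wt A C (fst q) (snd q))" for q :: "('a \<Rightarrow> nat) \<times> tr" and p :: "('a \<Rightarrow> nat) \<times> tr list"
  have inner: "isum A (F q) (PSet A C e Q (fst q)) = Some (pmul A (pmul A (Z (fst q)) (e (fst q))) (wt A C (fst q) (snd q)))" for q
    unfolding F_def using isum_mult_r[OF isum_mult_r[OF Z[unfolded Xq_def]]] by blast
  have sig: "isum A (\<lambda>r. F (fst r) (snd r)) (Sigma (Isp A C \<tau>) (\<lambda>q. PSet A C e Q (fst q))) = Some (S \<tau>)"
    using isum_sigma[of F "Isp A C \<tau>" "\<lambda>q. PSet A C e Q (fst q)"] inner SP[unfolded SPsum_def] by simp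
  let ?h = "\<lambda>r::(('a \<Rightarrow> nat) \<times> tr) \<times> (('a \<Rightarrow> nat) \<times> tr list). (fst (snd r), snd (snd r) @ [snd (fst r)])"
  let ?h' = "\<lambda>p::('a \<Rightarrow> nat) \<times> tr list. ((enP A C e (fst p) (butlast (snd p)), last (snd p)), (fst p, butlast (snd p)))"
  have bij: "bij_betw ?h (Sigma (Isp A C \<tau>) (\<lambda>q. PSet A C e Q (fst q))) (?P - {(\<tau>, [])})"
  proof (rule bij_betw_byWitness[where f' = ?h'])
    show "\<forall>r\<in>Sigma (Isp A C \<tau>) (\<lambda>q. PSet A C e Q (fst q)). ?h' (?h r) = r"
      unfolding PSet_def by auto
    show "\<forall>p\<in>?P - {(\<tau>, [])}. ?h (?h' p) = p"
    proof
      fix p assume p: "p \<in> ?P - {(\<tau>, [])}"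
      then have "snd p \<noteq> []" unfolding PSet_def by (cases p) auto
      then show "?h (?h' p) = p" by (cases p) simp
    qed
    show "?h ` Sigma (Isp A C \<tau>) (\<lambda>q. PSet A C e Q (fst q)) \<subseteq> ?P - {(\<tau>, [])}"
    proof
      fix p assume "p \<in> ?h ` Sigma (Isp A C \<tau>) (\<lambda>q. PSet A C e Q (fst q))"
      then obtain \<iota> t \<sigma> ts where r: "p = (\<sigma>, ts @ [t])" "ok A C \<iota> t" "en A C \<iota> t = \<tau>" "ts \<in> Q"
        "okP A C e \<sigma> ts" "enP A C e \<sigma> ts = \<iota>"
        unfolding PSet_def Isp_def by auto
      then show "p \<in> ?P - {(\<tau>, [])}" unfolding PSet_def by (auto simp: okP_snoc enP_snoc)
    qed
    show "?h' ` (?P - {(\<tau>, [])}) \<subseteq> Sigma (Isp A C \<tau>) (\<lambda>q. PSet A C e Q (fst q))"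
    proof
      fix r assume "r \<in> ?h' ` (?P - {(\<tau>, [])})"
      then obtain p0 where p0: "p0 \<in> ?P" "p0 \<noteq> (\<tau>, [])" "r = ?h' p0" by blast
      obtain \<sigma> xs where pe: "p0 = (\<sigma>, xs)" by (cases p0)
      have p: "r = ?h' (\<sigma>, xs)" "(\<sigma>, xs) \<in> ?P" "(\<sigma>, xs) \<noteq> (\<tau>, [])" using p0 pe by auto
      then have "xs \<noteq> []" unfolding PSet_def by auto
      then obtain ts t where xs: "xs = ts @ [t]" "ts \<in> Q" using p(2) unfolding PSet_def by auto
      have "okP A C e \<sigma> ts" "ok A C (enP A C e \<sigma> ts) t" "en A C (enP A C e \<sigma> ts) t = \<tau>"
        using p(2) xs unfolding PSet_def by (auto simp: okP_snoc enP_snoc)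
      then show "r \<in> Sigma (Isp A C \<tau>) (\<lambda>q. PSet A C e Q (fst q))"
        using p(1) xs unfolding PSet_def Isp_def by auto
    qed
  qed
  have "isum A (\<lambda>r. F (fst r) (snd r)) (Sigma (Isp A C \<tau>) (\<lambda>q. PSet A C e Q (fst q))) = isum A ?f (?P - {(\<tau>, [])})"
  proof (rule isum_reindex_cong[OF bij])
    fix r assume "r \<in> Sigma (Isp A C \<tau>) (\<lambda>q. PSet A C e Q (fst q))"
    then obtain \<iota> t \<sigma> ts where r: "r = ((\<iota>, t), (\<sigma>, ts))" "ok A C \<iota> t" "en A C \<iota> t = \<tau>" "ts \<in> Q"
        "okP A C e \<sigma> ts" "enP A C e \<sigma> ts = \<iota>"
      unfolding PSet_def Isp_def by auto
    then show "F (fst r) (snd r) = ?f (?h r)" unfolding F_def by (auto simp: wtP_snoc massoc)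
  qed
  then have two: "isum A ?f (?P - {(\<tau>, [])}) = Some (S \<tau>)" using sig by simp
  have "Xq A C e \<mu> ?Q' \<tau> = isum A ?f ({(\<tau>, [])} \<union> (?P - {(\<tau>, [])}))" unfolding Xq_def using spl by simp
  also have "\<dots> = padd A (\<mu> \<tau>) (S \<tau>)" unfolding isum_union[OF dj] one two by simp
  finally show ?thesis .
qed

end


context ps begin

lemma Qn_cons: "{[]} \<union> {t # ts | t ts. ts \<in> {ts. length ts < n}} = {ts::tr list. length ts < Suc n}"
proof (rule set_eqI)
  fix xs :: "tr list"
  show "xs \<in> {[]} \<union> {t # ts | t ts. ts \<in> {ts. length ts < n}} \<longleftrightarrow> xs \<in> {ts. length ts < Suc n}"
    by (cases xs) auto
qed

lemma UNIV_cons: "{[]} \<union> {t # ts | t ts. ts \<in> (UNIV :: tr list set)} = UNIV"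
proof (rule set_eqI)
  fix xs :: "tr list"
  show "xs \<in> {[]} \<union> {t # ts | t ts. ts \<in> UNIV} \<longleftrightarrow> xs \<in> UNIV"
    by (cases xs) auto
qed

lemma step_wp:
  assumes G: "GOOD A C" and Z: "\<And>\<iota>. Vq A C e h Q \<iota> = Some (Z \<iota>)"
    and S: "wp A C Z = Some S"
  shows "Vq A C e h ({[]} \<union> {t # ts | t ts. ts \<in> Q}) \<sigma> = padd A (h \<sigma>) (pmul A (e \<sigma>) (S \<sigma>))"
proof -
  let ?Q' = "{[]} \<union> {t # ts | t ts. ts \<in> Q}"
  let ?J = "JSet A C e ?Q' \<sigma>"
  let ?f = "\<lambda>ts. pmul A (wtP A C e \<sigma> ts) (h (enP A C e \<sigma> ts))"
  have mem: "[] \<in> ?J" unfolding JSet_def by simp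
  have spl: "?J = {[]} \<union> (?J - {[]})" using mem by blast
  have dj: "{[]} \<inter> (?J - {[]}) = {}" by blast
  have one: "isum A ?f {[]} = Some (h \<sigma>)" by simp
  have WP: "WPsum A C Z \<sigma> = Some (S \<sigma>)" using G S unfolding GOOD_def P1wp_def by blast
  define F where "F t ts = pmul A (e \<sigma>) (pmul A (wt A C \<sigma> t) (pmul A (wtP A C e (en A C \<sigma> t) ts) (h (enP A C e (en A C \<sigma> t) ts))))" for t ts
  have inner: "isum A (F t) (JSet A C e Q (en A C \<sigma> t)) = Some (pmul A (e \<sigma>) (pmul A (wt A C \<sigma> t) (Z (en A C \<sigma> t))))" for t
    unfolding F_def using isum_mult_l[OF isum_mult_l[OF Z[unfolded Vq_def]]] by blast
  have sig: "isum A (\<lambda>r. F (fst r) (snd r)) (Sigma (Jwp A C \<sigma>) (\<lambda>t. JSet A C e Q (en A C \<sigma> t))) = Some (pmul A (e \<sigma>) (S \<sigma>))"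
    using isum_sigma[of F "Jwp A C \<sigma>" "\<lambda>t. JSet A C e Q (en A C \<sigma> t)"] inner isum_mult_l[OF WP[unfolded WPsum_def]] by simp
  let ?h = "\<lambda>r::tr \<times> tr list. fst r # snd r"
  let ?h' = "\<lambda>xs::tr list. (hd xs, tl xs)"
  have bij: "bij_betw ?h (Sigma (Jwp A C \<sigma>) (\<lambda>t. JSet A C e Q (en A C \<sigma> t))) (?J - {[]})"
  proof (rule bij_betw_byWitness[where f' = ?h'])
    show "\<forall>r\<in>Sigma (Jwp A C \<sigma>) (\<lambda>t. JSet A C e Q (en A C \<sigma> t)). ?h' (?h r) = r" by auto
    show "\<forall>p\<in>?J - {[]}. ?h (?h' p) = p" by auto
    show "?h ` Sigma (Jwp A C \<sigma>) (\<lambda>t. JSet A C e Q (en A C \<sigma> t)) \<subseteq> ?J - {[]}"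
      unfolding JSet_def Jwp_def by (auto simp: okP_cons)
    show "?h' ` (?J - {[]}) \<subseteq> Sigma (Jwp A C \<sigma>) (\<lambda>t. JSet A C e Q (en A C \<sigma> t))"
    proof
      fix r assume "r \<in> ?h' ` (?J - {[]})"
      then obtain xs where xs: "xs \<in> ?J" "xs \<noteq> []" "r = ?h' xs" by blast
      then obtain t ts where tts: "xs = t # ts" "ts \<in> Q" unfolding JSet_def by auto
      then show "r \<in> Sigma (Jwp A C \<sigma>) (\<lambda>t. JSet A C e Q (en A C \<sigma> t))"
        using xs unfolding JSet_def Jwp_def by (auto simp: okP_cons)
    qed
  qed
  have "isum A (\<lambda>r. F (fst r) (snd r)) (Sigma (Jwp A C \<sigma>) (\<lambda>t. JSet A C e Q (en A C \<sigma> t))) = isum A ?f (?J - {[]})"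
  proof (rule isum_reindex_cong[OF bij])
    fix r assume "r \<in> Sigma (Jwp A C \<sigma>) (\<lambda>t. JSet A C e Q (en A C \<sigma> t))"
    then obtain t ts where r: "r = (t, ts)" "ok A C \<sigma> t" "okP A C e (en A C \<sigma> t) ts"
      unfolding JSet_def Jwp_def by auto
    then show "F (fst r) (snd r) = ?f (?h r)" unfolding F_def by (auto simp: wtP_cons enP_cons massoc)
  qed
  then have two: "isum A ?f (?J - {[]}) = Some (pmul A (e \<sigma>) (S \<sigma>))" using sig by simp
  have "Vq A C e h ?Q' \<sigma> = isum A ?f ({[]} \<union> (?J - {[]}))" unfolding Vq_def using spl by simp
  also have "\<dots> = padd A (h \<sigma>) (pmul A (e \<sigma>) (S \<sigma>))" unfolding isum_union[OF dj] one two by simp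
  finally show ?thesis .
qed

definition PhiS where "PhiS C e \<mu> = (\<lambda>X. Option.bind (sp A C (\<lambda>\<sigma>. pmul A (X \<sigma>) (e \<sigma>))) (\<lambda>Y. qadd A \<mu> Y))"
definition PsiW where "PsiW C e e' g = (\<lambda>X. Option.bind (wp A C X) (\<lambda>Y. qadd A (\<lambda>\<sigma>. pmul A (e' \<sigma>) (g \<sigma>)) (\<lambda>\<sigma>. pmul A (e \<sigma>) (Y \<sigma>))))"

lemma bounded_lengths: "finite F \<Longrightarrow> \<exists>n. \<forall>p\<in>F. length (snd p) < (n::nat)"
proof -
  assume "finite F"
  then have "finite (length ` snd ` F)" by simp
  then obtain m where "\<forall>k\<in>length ` snd ` F. k < m" using finite_nat_set_iff_bounded by blast
  then show ?thesis by auto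
qed

lemma bounded_lengths2: "finite F \<Longrightarrow> \<exists>n. \<forall>p\<in>F. length p < (n::nat)"
proof -
  assume "finite F"
  then have "finite (length ` F)" by simp
  then obtain m where "\<forall>k\<in>length ` F. k < m" using finite_nat_set_iff_bounded by blast
  then show ?thesis by auto
qed

lemma A_sp:
  assumes G: "GOOD A C" and Y1: "sp A C (\<lambda>\<sigma>. pmul A (Y \<sigma>) (e \<sigma>)) = Some SY"
    and Y2: "\<And>\<tau>. padd A (\<mu> \<tau>) (SY \<tau>) = Some (Y \<tau>)"
  shows "\<exists>X. (\<forall>\<tau>. Xq A C e \<mu> UNIV \<tau> = Some (X \<tau>)) \<and> qle A X Y"
proof -
  have fin: "\<exists>Z. (\<forall>\<iota>. Xq A C e \<mu> {ts. length ts < n} \<iota> = Some (Z \<iota>)) \<and> qle A Z Y" for n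
  proof (induction n)
    case 0
    have "Xq A C e \<mu> {ts. length ts < 0} \<iota> = Some (pzero A)" for \<iota> unfolding Xq_def PSet_def by simp
    then show ?case unfolding qle_def by (intro exI[of _ "\<lambda>_. pzero A"]) auto
  next
    case (Suc n)
    then obtain Z where Z: "\<And>\<iota>. Xq A C e \<mu> {ts. length ts < n} \<iota> = Some (Z \<iota>)" "qle A Z Y" by blast
    have "qle A (\<lambda>\<sigma>. pmul A (Z \<sigma>) (e \<sigma>)) (\<lambda>\<sigma>. pmul A (Y \<sigma>) (e \<sigma>))"
      using Z(2) mul_mono_r unfolding qle_def by blast
    from SP_mono2[OF G Y1 this] obtain S where S: "sp A C (\<lambda>\<sigma>. pmul A (Z \<sigma>) (e \<sigma>)) = Some S" "qle A S SY" by blast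
    have st: "Xq A C e \<mu> {ts. length ts < Suc n} \<tau> = padd A (\<mu> \<tau>) (S \<tau>)" for \<tau>
      using step_sp[OF G Z(1) S(1), of \<tau>] unfolding Qn_snoc .
    have "\<forall>\<tau>. \<exists>c. Xq A C e \<mu> {ts. length ts < Suc n} \<tau> = Some c \<and> nle A c (Y \<tau>)"
    proof
      fix \<tau>
      from add_mono[OF le_refl _ Y2[of \<tau>], of "S \<tau>"] S(2) obtain c where "padd A (\<mu> \<tau>) (S \<tau>) = Some c" "nle A c (Y \<tau>)"
        unfolding qle_def by blast
      then show "\<exists>c. Xq A C e \<mu> {ts. length ts < Suc n} \<tau> = Some c \<and> nle A c (Y \<tau>)" using st by simp
    qed
    then obtain Z' where "\<forall>\<tau>. Xq A C e \<mu> {ts. length ts < Suc n} \<tau> = Some (Z' \<tau>) \<and> nle A (Z' \<tau>) (Y \<tau>)"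
      by (metis choice)
    then show ?case unfolding qle_def by blast
  qed
  have "\<forall>\<tau>. \<exists>u. Xq A C e \<mu> UNIV \<tau> = Some u \<and> nle A u (Y \<tau>)"
  proof
    fix \<tau>
    show "\<exists>u. Xq A C e \<mu> UNIV \<tau> = Some u \<and> nle A u (Y \<tau>)"
      unfolding Xq_def
    proof (rule isum_bound)
      fix F assume F: "finite F" "F \<subseteq> PSet A C e UNIV \<tau>"
      obtain n where n: "\<forall>p\<in>F. length (snd p) < n" using bounded_lengths[OF F(1)] by blast
      obtain Z where Z: "\<And>\<iota>. Xq A C e \<mu> {ts. length ts < n} \<iota> = Some (Z \<iota>)" "qle A Z Y" using fin by blast
      have "F \<subseteq> PSet A C e {ts. length ts < n} \<tau>" using F n unfolding PSet_def by auto
      from isum_le[OF Z(1)[unfolded Xq_def] F(1) this]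
      obtain x where "fsum A (\<lambda>p. pmul A (\<mu> (fst p)) (wtP A C e (fst p) (snd p))) F = Some x" "nle A x (Z \<tau>)" by blast
      then show "\<exists>x. fsum A (\<lambda>p. pmul A (\<mu> (fst p)) (wtP A C e (fst p) (snd p))) F = Some x \<and> nle A x (Y \<tau>)"
        using Z(2) le_trans unfolding qle_def by blast
    qed
  qed
  then obtain X where "\<forall>\<tau>. Xq A C e \<mu> UNIV \<tau> = Some (X \<tau>) \<and> nle A (X \<tau>) (Y \<tau>)" by (metis choice)
  then show ?thesis unfolding qle_def by blast
qed

lemma B_sp:
  assumes G: "GOOD A C" and X: "\<And>\<tau>. Xq A C e \<mu> UNIV \<tau> = Some (X \<tau>)"
    and S: "sp A C (\<lambda>\<sigma>. pmul A (X \<sigma>) (e \<sigma>)) = Some S"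
  shows "PhiS C e \<mu> X = Some X"
proof -
  have "padd A (\<mu> \<tau>) (S \<tau>) = Some (X \<tau>)" for \<tau>
    using step_sp[OF G X S, of \<tau>] X[of \<tau>] unfolding UNIV_snoc by simp
  then have "qadd A \<mu> S = Some X" by (rule qadd_SomeI)
  then show ?thesis unfolding PhiS_def using S by simp
qed

lemma A_wp:
  assumes G: "GOOD A C" and Y1: "wp A C Y = Some SY"
    and Y2: "\<And>\<sigma>. padd A (h \<sigma>) (pmul A (e \<sigma>) (SY \<sigma>)) = Some (Y \<sigma>)"
  shows "\<exists>X. (\<forall>\<sigma>. Vq A C e h UNIV \<sigma> = Some (X \<sigma>)) \<and> qle A X Y"
proof -
  have fin: "\<exists>Z. (\<forall>\<iota>. Vq A C e h {ts. length ts < n} \<iota> = Some (Z \<iota>)) \<and> qle A Z Y" for n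
  proof (induction n)
    case 0
    have "Vq A C e h {ts. length ts < 0} \<iota> = Some (pzero A)" for \<iota> unfolding Vq_def JSet_def by simp
    then show ?case unfolding qle_def by (intro exI[of _ "\<lambda>_. pzero A"]) auto
  next
    case (Suc n)
    then obtain Z where Z: "\<And>\<iota>. Vq A C e h {ts. length ts < n} \<iota> = Some (Z \<iota>)" "qle A Z Y" by blast
    from WP_mono2[OF G Y1 Z(2)] obtain S where S: "wp A C Z = Some S" "qle A S SY" by blast
    have st: "Vq A C e h {ts. length ts < Suc n} \<sigma> = padd A (h \<sigma>) (pmul A (e \<sigma>) (S \<sigma>))" for \<sigma>
      using step_wp[OF G Z(1) S(1), of \<sigma>] unfolding Qn_cons .
    have "\<forall>\<sigma>. \<exists>c. Vq A C e h {ts. length ts < Suc n} \<sigma> = Some c \<and> nle A c (Y \<sigma>)"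
    proof
      fix \<sigma>
      have "nle A (pmul A (e \<sigma>) (S \<sigma>)) (pmul A (e \<sigma>) (SY \<sigma>))" using S(2) mul_mono_l unfolding qle_def by blast
      from add_mono[OF le_refl this Y2[of \<sigma>]] obtain c where "padd A (h \<sigma>) (pmul A (e \<sigma>) (S \<sigma>)) = Some c" "nle A c (Y \<sigma>)"
        by blast
      then show "\<exists>c. Vq A C e h {ts. length ts < Suc n} \<sigma> = Some c \<and> nle A c (Y \<sigma>)" using st by simp
    qed
    then obtain Z' where "\<forall>\<sigma>. Vq A C e h {ts. length ts < Suc n} \<sigma> = Some (Z' \<sigma>) \<and> nle A (Z' \<sigma>) (Y \<sigma>)"
      by (metis choice)
    then show ?case unfolding qle_def by blast
  qed
  have "\<forall>\<sigma>. \<exists>u. Vq A C e h UNIV \<sigma> = Some u \<and> nle A u (Y \<sigma>)"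
  proof
    fix \<sigma>
    show "\<exists>u. Vq A C e h UNIV \<sigma> = Some u \<and> nle A u (Y \<sigma>)"
      unfolding Vq_def
    proof (rule isum_bound)
      fix F assume F: "finite F" "F \<subseteq> JSet A C e UNIV \<sigma>"
      obtain n where n: "\<forall>p\<in>F. length p < n" using bounded_lengths2[OF F(1)] by blast
      obtain Z where Z: "\<And>\<iota>. Vq A C e h {ts. length ts < n} \<iota> = Some (Z \<iota>)" "qle A Z Y" using fin by blast
      have "F \<subseteq> JSet A C e {ts. length ts < n} \<sigma>" using F n unfolding JSet_def by auto
      from isum_le[OF Z(1)[unfolded Vq_def] F(1) this]
      obtain x where "fsum A (\<lambda>ts. pmul A (wtP A C e \<sigma> ts) (h (enP A C e \<sigma> ts))) F = Some x" "nle A x (Z \<sigma>)" by blast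
      then show "\<exists>x. fsum A (\<lambda>ts. pmul A (wtP A C e \<sigma> ts) (h (enP A C e \<sigma> ts))) F = Some x \<and> nle A x (Y \<sigma>)"
        using Z(2) le_trans unfolding qle_def by blast
    qed
  qed
  then obtain X where "\<forall>\<sigma>. Vq A C e h UNIV \<sigma> = Some (X \<sigma>) \<and> nle A (X \<sigma>) (Y \<sigma>)" by (metis choice)
  then show ?thesis unfolding qle_def by blast
qed

lemma B_wp:
  assumes G: "GOOD A C" and X: "\<And>\<sigma>. Vq A C e (\<lambda>\<sigma>. pmul A (e' \<sigma>) (g \<sigma>)) UNIV \<sigma> = Some (X \<sigma>)"
    and S: "wp A C X = Some S"
  shows "PsiW C e e' g X = Some X"
proof -
  have "padd A (pmul A (e' \<sigma>) (g \<sigma>)) (pmul A (e \<sigma>) (S \<sigma>)) = Some (X \<sigma>)" for \<sigma>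
    using step_wp[OF G X S, of \<sigma>] X[of \<sigma>] unfolding UNIV_cons by simp
  then have "qadd A (\<lambda>\<sigma>. pmul A (e' \<sigma>) (g \<sigma>)) (\<lambda>\<sigma>. pmul A (e \<sigma>) (S \<sigma>)) = Some X" by (rule qadd_SomeI)
  then show ?thesis unfolding PsiW_def using S by simp
qed

end


context ps begin

lemma sp_Iter_eq: "sp A (Iter C e e') \<mu> = Option.bind (plfp A (PhiS C e \<mu>)) (\<lambda>L. Some (\<lambda>\<sigma>. pmul A (L \<sigma>) (e' \<sigma>)))"
  by (simp add: PhiS_def)
lemma wp_Iter_eq: "wp A (Iter C e e') g = plfp A (PsiW C e e' g)"
  by (simp add: PsiW_def)

lemma iter_sp_char:
  assumes G: "GOOD A C" and L: "plfp A (PhiS C e \<mu>) = Some L"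
  shows "(\<forall>\<tau>. Xq A C e \<mu> UNIV \<tau> = Some (L \<tau>)) \<and> (\<exists>SL. sp A C (\<lambda>\<sigma>. pmul A (L \<sigma>) (e \<sigma>)) = Some SL)"
proof -
  have fp: "PhiS C e \<mu> L = Some L" using plfp_SomeD(1)[OF L] .
  then obtain SL where SL: "sp A C (\<lambda>\<sigma>. pmul A (L \<sigma>) (e \<sigma>)) = Some SL" "qadd A \<mu> SL = Some L"
    unfolding PhiS_def by (cases "sp A C (\<lambda>\<sigma>. pmul A (L \<sigma>) (e \<sigma>))") auto
  obtain X where X: "\<And>\<tau>. Xq A C e \<mu> UNIV \<tau> = Some (X \<tau>)" "qle A X L"
    using A_sp[OF G SL(1) qadd_SomeD[OF SL(2)]] by blast
  have "qle A (\<lambda>\<sigma>. pmul A (X \<sigma>) (e \<sigma>)) (\<lambda>\<sigma>. pmul A (L \<sigma>) (e \<sigma>))"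
    using X(2) mul_mono_r unfolding qle_def by blast
  from SP_mono2[OF G SL(1) this] obtain S where S: "sp A C (\<lambda>\<sigma>. pmul A (X \<sigma>) (e \<sigma>)) = Some S" by blast
  have "PhiS C e \<mu> X = Some X" by (rule B_sp[OF G X(1) S])
  then have "qle A L X" by (rule plfp_SomeD(2)[OF L])
  then have "X = L" using X(2) qle_antisym by blast
  then show ?thesis using X(1) SL(1) by blast
qed

lemma iter_sp_plfp:
  assumes G: "GOOD A C" and X: "\<And>\<tau>. Xq A C e \<mu> UNIV \<tau> = Some (X \<tau>)"
    and S: "sp A C (\<lambda>\<sigma>. pmul A (X \<sigma>) (e \<sigma>)) = Some S"
  shows "plfp A (PhiS C e \<mu>) = Some X"
proof (rule plfp_SomeI[where \<Phi>="PhiS C e \<mu>" and X=X, OF B_sp[OF G X S]])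
  fix Y assume "PhiS C e \<mu> Y = Some Y"
  then obtain SY where SY: "sp A C (\<lambda>\<sigma>. pmul A (Y \<sigma>) (e \<sigma>)) = Some SY" "qadd A \<mu> SY = Some Y"
    unfolding PhiS_def by (cases "sp A C (\<lambda>\<sigma>. pmul A (Y \<sigma>) (e \<sigma>))") auto
  obtain X' where X': "\<And>\<tau>. Xq A C e \<mu> UNIV \<tau> = Some (X' \<tau>)" "qle A X' Y"
    using A_sp[OF G SY(1) qadd_SomeD[OF SY(2)]] by blast
  have "X' = X" using X X'(1) by (simp add: fun_eq_iff)
  then show "qle A X Y" using X'(2) by simp
qed

lemma iter_wp_char:
  assumes G: "GOOD A C" and L: "plfp A (PsiW C e e' g) = Some L"
  shows "(\<forall>\<sigma>. Vq A C e (\<lambda>\<sigma>. pmul A (e' \<sigma>) (g \<sigma>)) UNIV \<sigma> = Some (L \<sigma>)) \<and> (\<exists>SL. wp A C L = Some SL)"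
proof -
  have fp: "PsiW C e e' g L = Some L" using plfp_SomeD(1)[OF L] .
  then obtain SL where SL: "wp A C L = Some SL" "qadd A (\<lambda>\<sigma>. pmul A (e' \<sigma>) (g \<sigma>)) (\<lambda>\<sigma>. pmul A (e \<sigma>) (SL \<sigma>)) = Some L"
    unfolding PsiW_def by (cases "wp A C L") auto
  obtain X where X: "\<And>\<sigma>. Vq A C e (\<lambda>\<sigma>. pmul A (e' \<sigma>) (g \<sigma>)) UNIV \<sigma> = Some (X \<sigma>)" "qle A X L"
    using A_wp[OF G SL(1), of "\<lambda>\<sigma>. pmul A (e' \<sigma>) (g \<sigma>)"] qadd_SomeD[OF SL(2)] by blast
  from WP_mono2[OF G SL(1) X(2)] obtain S where S: "wp A C X = Some S" by blast
  have "PsiW C e e' g X = Some X" by (rule B_wp[OF G X(1) S])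
  then have "qle A L X" by (rule plfp_SomeD(2)[OF L])
  then have "X = L" using X(2) qle_antisym by blast
  then show ?thesis using X(1) SL(1) by blast
qed

lemma iter_wp_plfp:
  assumes G: "GOOD A C" and X: "\<And>\<sigma>. Vq A C e (\<lambda>\<sigma>. pmul A (e' \<sigma>) (g \<sigma>)) UNIV \<sigma> = Some (X \<sigma>)"
    and S: "wp A C X = Some S"
  shows "plfp A (PsiW C e e' g) = Some X"
proof (rule plfp_SomeI[where \<Phi>="PsiW C e e' g" and X=X, OF B_wp[OF G X S]])
  fix Y assume "PsiW C e e' g Y = Some Y"
  then obtain SY where SY: "wp A C Y = Some SY" "qadd A (\<lambda>\<sigma>. pmul A (e' \<sigma>) (g \<sigma>)) (\<lambda>\<sigma>. pmul A (e \<sigma>) (SY \<sigma>)) = Some Y"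
    unfolding PsiW_def by (cases "wp A C Y") auto
  obtain X' where X': "\<And>\<sigma>. Vq A C e (\<lambda>\<sigma>. pmul A (e' \<sigma>) (g \<sigma>)) UNIV \<sigma> = Some (X' \<sigma>)" "qle A X' Y"
    using A_wp[OF G SY(1), of "\<lambda>\<sigma>. pmul A (e' \<sigma>) (g \<sigma>)"] qadd_SomeD[OF SY(2)] by blast
  have "X' = X" using X X'(1) by (simp add: fun_eq_iff)
  then show "qle A X Y" using X'(2) by simp
qed

lemma GOOD_Iter:
  assumes G: "GOOD A C"
  shows "GOOD A (Iter C e e')"
proof -
  have p1: "P1sp A (Iter C e e')" unfolding P1sp_def
  proof (intro allI impI)
    fix \<mu> s \<tau> assume sp: "sp A (Iter C e e') \<mu> = Some s"
    then obtain L where L: "plfp A (PhiS C e \<mu>) = Some L" "s = (\<lambda>\<sigma>. pmul A (L \<sigma>) (e' \<sigma>))"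
      unfolding sp_Iter_eq by (cases "plfp A (PhiS C e \<mu>)") auto
    have X: "Xq A C e \<mu> UNIV \<tau> = Some (L \<tau>)" using iter_sp_char[OF G L(1)] by blast
    have m: "isum A (\<lambda>p. pmul A (pmul A (\<mu> (fst p)) (wtP A C e (fst p) (snd p))) (e' \<tau>)) (PSet A C e UNIV \<tau>) = Some (pmul A (L \<tau>) (e' \<tau>))"
      using isum_mult_r[OF X[unfolded Xq_def]] by blast
    let ?h = "\<lambda>p::('a \<Rightarrow> nat) \<times> tr list. (fst p, TI (snd p))"
    let ?h' = "\<lambda>p::('a \<Rightarrow> nat) \<times> tr. (fst p, case snd p of TI ts \<Rightarrow> ts | _ \<Rightarrow> [])"
    have bij: "bij_betw ?h (PSet A C e UNIV \<tau>) (Isp A (Iter C e e') \<tau>)"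
    proof (rule bij_betw_byWitness[where f' = ?h'])
      show "\<forall>p\<in>PSet A C e UNIV \<tau>. ?h' (?h p) = p" by auto
      show "\<forall>p\<in>Isp A (Iter C e e') \<tau>. ?h (?h' p) = p" unfolding Isp_def okIter by auto
      show "?h ` PSet A C e UNIV \<tau> \<subseteq> Isp A (Iter C e e') \<tau>"
        unfolding Isp_def PSet_def by (auto simp: okIter enIter)
      show "?h' ` Isp A (Iter C e e') \<tau> \<subseteq> PSet A C e UNIV \<tau>"
        unfolding Isp_def PSet_def okIter by (auto simp: enIter)
    qed
    have "isum A (\<lambda>p. pmul A (pmul A (\<mu> (fst p)) (wtP A C e (fst p) (snd p))) (e' \<tau>)) (PSet A C e UNIV \<tau>) = SPsum A (Iter C e e') \<mu> \<tau>"
      unfolding SPsum_def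
    proof (rule isum_reindex_cong[OF bij])
      fix p assume "p \<in> PSet A C e UNIV \<tau>"
      then show "pmul A (pmul A (\<mu> (fst p)) (wtP A C e (fst p) (snd p))) (e' \<tau>) =
          pmul A (\<mu> (fst (?h p))) (wt A (Iter C e e') (fst (?h p)) (snd (?h p)))"
        unfolding PSet_def by (auto simp: wtIter massoc)
    qed
    then show "SPsum A (Iter C e e') \<mu> \<tau> = Some (s \<tau>)" using m L(2) by simp
  qed
  have p2: "P2sp A (Iter C e e')" unfolding P2sp_def
  proof (intro allI impI)
    fix \<mu> \<mu>' s assume sp: "sp A (Iter C e e') \<mu> = Some s" and le: "qle A \<mu>' \<mu>"
    then obtain L where L: "plfp A (PhiS C e \<mu>) = Some L"
      unfolding sp_Iter_eq by (cases "plfp A (PhiS C e \<mu>)") auto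
    obtain SL where X: "\<And>\<tau>. Xq A C e \<mu> UNIV \<tau> = Some (L \<tau>)" and SL: "sp A C (\<lambda>\<sigma>. pmul A (L \<sigma>) (e \<sigma>)) = Some SL"
      using iter_sp_char[OF G L] by blast
    have "\<forall>\<tau>. \<exists>u. Xq A C e \<mu>' UNIV \<tau> = Some u \<and> nle A u (L \<tau>)"
    proof
      fix \<tau>
      have "\<forall>p\<in>PSet A C e UNIV \<tau>. nle A (pmul A (\<mu>' (fst p)) (wtP A C e (fst p) (snd p))) (pmul A (\<mu> (fst p)) (wtP A C e (fst p) (snd p)))"
        using le mul_mono_r unfolding qle_def by blast
      from isum_mono[OF this X[of \<tau>, unfolded Xq_def]] show "\<exists>u. Xq A C e \<mu>' UNIV \<tau> = Some u \<and> nle A u (L \<tau>)"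
        unfolding Xq_def by blast
    qed
    then obtain X' where X': "\<forall>\<tau>. Xq A C e \<mu>' UNIV \<tau> = Some (X' \<tau>) \<and> nle A (X' \<tau>) (L \<tau>)" by (metis choice)
    have "qle A (\<lambda>\<sigma>. pmul A (X' \<sigma>) (e \<sigma>)) (\<lambda>\<sigma>. pmul A (L \<sigma>) (e \<sigma>))"
      using X' mul_mono_r unfolding qle_def by blast
    from SP_mono2[OF G SL this] obtain S' where S': "sp A C (\<lambda>\<sigma>. pmul A (X' \<sigma>) (e \<sigma>)) = Some S'" by blast
    have "plfp A (PhiS C e \<mu>') = Some X'" using iter_sp_plfp[OF G _ S'] X' by blast
    then show "sp A (Iter C e e') \<mu>' \<noteq> None" unfolding sp_Iter_eq by simp
  qed
  have p1w: "P1wp A (Iter C e e')" unfolding P1wp_def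
  proof (intro allI impI)
    fix g w \<sigma> assume wp: "wp A (Iter C e e') g = Some w"
    then have L: "plfp A (PsiW C e e' g) = Some w" unfolding wp_Iter_eq .
    have V: "Vq A C e (\<lambda>\<sigma>. pmul A (e' \<sigma>) (g \<sigma>)) UNIV \<sigma> = Some (w \<sigma>)" using iter_wp_char[OF G L] by blast
    let ?h' = "\<lambda>t. case t of TI ts \<Rightarrow> ts | _ \<Rightarrow> []"
    have bij: "bij_betw TI (JSet A C e UNIV \<sigma>) (Jwp A (Iter C e e') \<sigma>)"
    proof (rule bij_betw_byWitness[where f' = ?h'])
      show "\<forall>p\<in>JSet A C e UNIV \<sigma>. ?h' (TI p) = p" by auto
      show "\<forall>p\<in>Jwp A (Iter C e e') \<sigma>. TI (?h' p) = p" unfolding Jwp_def okIter by auto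
      show "TI ` JSet A C e UNIV \<sigma> \<subseteq> Jwp A (Iter C e e') \<sigma>"
        unfolding Jwp_def JSet_def by (auto simp: okIter)
      show "?h' ` Jwp A (Iter C e e') \<sigma> \<subseteq> JSet A C e UNIV \<sigma>"
        unfolding Jwp_def JSet_def okIter by auto
    qed
    have "Vq A C e (\<lambda>\<sigma>. pmul A (e' \<sigma>) (g \<sigma>)) UNIV \<sigma> = WPsum A (Iter C e e') g \<sigma>"
      unfolding Vq_def WPsum_def
    proof (rule isum_reindex_cong[OF bij])
      fix ts assume "ts \<in> JSet A C e UNIV \<sigma>"
      then show "pmul A (wtP A C e \<sigma> ts) ((\<lambda>\<sigma>. pmul A (e' \<sigma>) (g \<sigma>)) (enP A C e \<sigma> ts)) =
          pmul A (wt A (Iter C e e') \<sigma> (TI ts)) (g (en A (Iter C e e') \<sigma> (TI ts)))"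
        unfolding JSet_def by (auto simp: wtIter enIter massoc)
    qed
    then show "WPsum A (Iter C e e') g \<sigma> = Some (w \<sigma>)" using V by simp
  qed
  have p2w: "P2wp A (Iter C e e')" unfolding P2wp_def
  proof (intro allI impI)
    fix g g' w assume wp: "wp A (Iter C e e') g = Some w" and le: "qle A g' g"
    have L: "plfp A (PsiW C e e' g) = Some w" using wp unfolding wp_Iter_eq .
    obtain Sw where V: "\<And>\<sigma>. Vq A C e (\<lambda>\<sigma>. pmul A (e' \<sigma>) (g \<sigma>)) UNIV \<sigma> = Some (w \<sigma>)" and Sw: "wp A C w = Some Sw"
      using iter_wp_char[OF G L] by blast
    have "\<forall>\<sigma>. \<exists>u. Vq A C e (\<lambda>\<sigma>. pmul A (e' \<sigma>) (g' \<sigma>)) UNIV \<sigma> = Some u \<and> nle A u (w \<sigma>)"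
    proof
      fix \<sigma>
      have "\<forall>ts\<in>JSet A C e UNIV \<sigma>. nle A (pmul A (wtP A C e \<sigma> ts) ((\<lambda>\<sigma>. pmul A (e' \<sigma>) (g' \<sigma>)) (enP A C e \<sigma> ts)))
             (pmul A (wtP A C e \<sigma> ts) ((\<lambda>\<sigma>. pmul A (e' \<sigma>) (g \<sigma>)) (enP A C e \<sigma> ts)))"
        using le mul_mono_l unfolding qle_def by simp
      from isum_mono[OF this V[of \<sigma>, unfolded Vq_def]]
      show "\<exists>u. Vq A C e (\<lambda>\<sigma>. pmul A (e' \<sigma>) (g' \<sigma>)) UNIV \<sigma> = Some u \<and> nle A u (w \<sigma>)"
        unfolding Vq_def by blast
    qed
    then obtain X' where X': "\<forall>\<sigma>. Vq A C e (\<lambda>\<sigma>. pmul A (e' \<sigma>) (g' \<sigma>)) UNIV \<sigma> = Some (X' \<sigma>) \<and> nle A (X' \<sigma>) (w \<sigma>)"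
      by (metis choice)
    have "qle A X' w" using X' unfolding qle_def by blast
    from WP_mono2[OF G Sw this] obtain S' where S': "wp A C X' = Some S'" by blast
    have "plfp A (PsiW C e e' g') = Some X'" using iter_wp_plfp[OF G _ S'] X' by blast
    then show "wp A (Iter C e e') g' \<noteq> None" unfolding wp_Iter_eq by simp
  qed
  show ?thesis unfolding GOOD_def using p1 p1w p2 p2w by blast
qed

lemma GOOD_all: "GOOD A C"
  by (induction C) (auto intro: GOOD_Assign GOOD_Havoc GOOD_Weight GOOD_Seq GOOD_Choice GOOD_Iter)

lemma duality:
  assumes sp: "sp A C \<mu> = Some s" and wp: "wp A C g = Some w"
  shows "isum A (\<lambda>\<tau>. pmul A (s \<tau>) (g \<tau>)) UNIV = isum A (\<lambda>\<sigma>. pmul A (\<mu> \<sigma>) (w \<sigma>)) UNIV"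
proof -
  have S: "\<And>\<tau>. SPsum A C \<mu> \<tau> = Some (s \<tau>)" using GOOD_all[of C] sp unfolding GOOD_def P1sp_def by blast
  have W: "\<And>\<sigma>. WPsum A C g \<sigma> = Some (w \<sigma>)" using GOOD_all[of C] wp unfolding GOOD_def P1wp_def by blast
  define F where "F \<tau> p = pmul A (pmul A (\<mu> (fst p)) (wt A C (fst p) (snd p))) (g \<tau>)" for \<tau> p
  define H where "H \<sigma> t = pmul A (\<mu> \<sigma>) (pmul A (wt A C \<sigma> t) (g (en A C \<sigma> t)))" for \<sigma> t
  have i1: "isum A (F \<tau>) (Isp A C \<tau>) = Some (pmul A (s \<tau>) (g \<tau>))" for \<tau>
    unfolding F_def using isum_mult_r[OF S[unfolded SPsum_def]] by blast
  have i2: "isum A (H \<sigma>) (Jwp A C \<sigma>) = Some (pmul A (\<mu> \<sigma>) (w \<sigma>))" for \<sigma>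
    unfolding H_def using isum_mult_l[OF W[unfolded WPsum_def]] by blast
  have l: "isum A (\<lambda>r. F (fst r) (snd r)) (Sigma UNIV (Isp A C)) = isum A (\<lambda>\<tau>. pmul A (s \<tau>) (g \<tau>)) UNIV"
    using isum_sigma[of F UNIV "Isp A C"] i1 by simp
  have r: "isum A (\<lambda>r. H (fst r) (snd r)) (Sigma UNIV (Jwp A C)) = isum A (\<lambda>\<sigma>. pmul A (\<mu> \<sigma>) (w \<sigma>)) UNIV"
    using isum_sigma[of H UNIV "Jwp A C"] i2 by simp
  let ?h = "\<lambda>r::('a \<Rightarrow> nat) \<times> ('a \<Rightarrow> nat) \<times> tr. snd r"
  let ?h' = "\<lambda>p::('a \<Rightarrow> nat) \<times> tr. (en A C (fst p) (snd p), p)"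
  have bij: "bij_betw ?h (Sigma UNIV (Isp A C)) (Sigma UNIV (Jwp A C))"
  proof (rule bij_betw_byWitness[where f' = ?h'])
    show "\<forall>r\<in>Sigma UNIV (Isp A C). ?h' (?h r) = r" unfolding Isp_def by auto
    show "\<forall>p\<in>Sigma UNIV (Jwp A C). ?h (?h' p) = p" by auto
    show "?h ` Sigma UNIV (Isp A C) \<subseteq> Sigma UNIV (Jwp A C)" unfolding Isp_def Jwp_def by auto
    show "?h' ` Sigma UNIV (Jwp A C) \<subseteq> Sigma UNIV (Isp A C)" unfolding Isp_def Jwp_def by auto
  qed
  have "isum A (\<lambda>r. F (fst r) (snd r)) (Sigma UNIV (Isp A C)) = isum A (\<lambda>r. H (fst r) (snd r)) (Sigma UNIV (Jwp A C))"
  proof (rule isum_reindex_cong[OF bij])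
    fix r assume "r \<in> Sigma UNIV (Isp A C)"
    then show "F (fst r) (snd r) = H (fst (?h r)) (snd (?h r))"
      unfolding F_def H_def Isp_def by (auto simp: massoc)
  qed
  then show ?thesis using l r by simp
qed

end

theorem mainTheorem3:
  fixes A :: "'u psr"
    and C :: "('v::finite, 'u) prog"
    and \<mu> g s w :: "('v, 'u) quant"
    and l r :: 'u
  assumes "partial_semiring A"
    and "sp A C \<mu> = Some s"
    and "wp A C g = Some w"
    and "isum A (\<lambda>\<tau>. pmul A (s \<tau>) (g \<tau>)) UNIV = Some l"
    and "isum A (\<lambda>\<sigma>. pmul A (\<mu> \<sigma>) (w \<sigma>)) UNIV = Some r"
  shows "l = r"
proof -
  interpret ps A by (rule ps.intro) (rule assms(1))
  show ?thesis using duality[OF assms(2,3)] assms(4,5) by simp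
qed



end
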